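(* Let $H_1,H_2$ be Hermitian matrices, $f_1,f_2:[0,T]\to\mathbb{R}$ with $f_j,f_j',f_j''$ bounded and continuous, $H(t)=f_1(t)H_1+f_2(t)H_2$. Assume $H_1=D_1^\dagger D_1$ for some matrix $D_1$ and that there are constants $\widetilde C_1,\widetilde C_2\ge0$ with $\|[H_1,H_2]\vec v\|\le\widetilde C_1(\|D_1\vec v\|+\|\vec v\|)$ and $\|[H_1,[H_1,H_2]]\vec v\|\le\widetilde C_2(\|H_1\vec v\|+\|\vec v\|)$ for all $\vec v$. Let $\vec\psi(t)=U(t,0)\vec\psi(0)$ be the exact solution, $L$ an integer with $h=T/L\le(\|f_1\|_\infty+\|f_2\|_\infty)^{-1}(\widetilde C_1+\|H_2\|)^{-1}/2$, and for each scheme $X\in\{(s,1),(g,1),(s,2),(g,2)\}$ let $\mathcal U_X=U_X(T,\tfrac{(L-1)T}{L})\cdots U_X(\tfrac TL,0)$. Then there exists a constant $\widetilde C$ (independent of $H_1$, $L$, $\vec\psi$) such that $$\|\mathcal U_{s,1}\vec\psi(0)-U(T,0)\vec\psi(0)\|\le\widetilde C\tfrac{T^2}{L}\Big(\sup_{t\in[0,T]}\|H_1\vec\psi(t)\|+\|\vec\psi(0)\|\Big),$$ $$\|\mathcal U_{g,1}\vec\psi(0)-U(T,0)\vec\psi(0)\|\le\widetilde C\tfrac{T^2}{L}\Big(\sup_{t\in[0,T]}\sqrt{\|\vec\psi(0)\|\|H_1\vec\psi(t)\|}+\|\vec\psi(0)\|\Big),$$ $$\|\mathcal U_{s,2}\vec\psi(0)-U(T,0)\vec\psi(0)\|\le\widetilde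 C\tfrac{T^3}{L^2}\Big(\sup_{t\in[0,T]}\|H_1\vec\psi(t)\|+\|\vec\psi(0)\|\Big),$$ $$\|\mathcal U_{g,2}\vec\psi(0)-U(T,0)\vec\psi(0)\|\le\widetilde C\tfrac{T^3}{L^2}\Big(\sup_{t\in[0,T]}\|H_1\vec\psi(t)\|+\|\vec\psi(0)\|\Big).$$
   Context: $\|\cdot\|$ is the vector 2-norm / induced operator norm, $\|f\|_\infty=\sup_{[0,T]}|f|$. The constant $\widetilde C$ may depend polynomially on $\|H_2\|$, $\|f_j^{(k)}\|_\infty$ ($k\le2$) and on $\widetilde C_1,\widetilde C_2$, but not on $H_1$. $U(t,s)$ is the exact evolution: $\partial_tU(t,s)=-\mathrm{i} H(t)U(t,s)$, $U(s,s)=I$. Trotter steps: $U_{s,1}(t+h,t)=\exp(-\mathrm{i} f_2(t+h)H_2h)\exp(-\mathrm{i} f_1(t+h)H_1h)$; $U_{g,1}(t+h,t)=\exp(-\mathrm{i}\int_t^{t+h}f_2(s)ds\,H_2)\exp(-\mathrm{i}\int_t^{t+h}f_1(s)ds\,H_1)$; $U_{s,2}(t+h,t)=\exp(-\frac{\mathrm{i} h}{2}f_1(t+h/2)H_1)\exp(-\mathrm{i} hf_2(t+h/2)H_2)\exp(-\frac{\mathrm{i} h}{2}f_1(t+h/2)H_1)$; $U_{g,2}(t+h,t)=\exp(-\mathrm{i}\int_{t+h/2}^{t+h}f_1(s)ds\,H_1)\exp(-\mathrm{i}\int_t^{t+h}f_2(s)ds\,H_2)\exp(-\mathrm{i}\int_t^{t+h/2}f_1(s)ds\,H_1)$.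 *)

theory Defs
  imports "HOL-Analysis.Analysis"
begin


text \<open>Conjugate transpose (dagger).\<close>
definition adj :: "complex ^ 'n::finite ^ 'm::finite \<Rightarrow> complex ^ 'm ^ 'n" where
  "adj A = (\<chi> i j. cnj (A $ j $ i))"

definition hermitian :: "complex ^ ('n::finite) ^ 'n \<Rightarrow> bool" where
  "hermitian A \<longleftrightarrow> adj A = A"

text \<open>Commutator of matrices.\<close>
definition comm :: "complex ^ ('n::finite) ^ 'n \<Rightarrow> complex ^ ('n::finite) ^ 'n \<Rightarrow> complex ^ ('n::finite) ^ 'n" where
  "comm A B = A ** B - B ** A"

text \<open>Operator (induced 2-)norm of a matrix.\<close>
definition opnorm :: "complex ^ ('n::finite) ^ 'n \<Rightarrow> real" where
  "opnorm A = onorm (\<lambda>v::complex ^ ('n::finite). A *v v)"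

text \<open>Action of the matrix exponential exp(c A) on a vector v, via its power series.\<close>
definition expm :: "complex \<Rightarrow> complex ^ ('n::finite) ^ 'n \<Rightarrow> complex ^ ('n::finite) \<Rightarrow> complex ^ ('n::finite)" where
  "expm c A v = (\<Sum>k. (c ^ k / of_nat (fact k)) *s (((\<lambda>w. A *v w) ^^ k) v))"

text \<open>Sup norm on [0,T].\<close>
definition supnorm :: "real \<Rightarrow> (real \<Rightarrow> real) \<Rightarrow> real" where
  "supnorm T f = (SUP t\<in>{0..T}. \<bar>f t\<bar>)"

text \<open>Trotter steps: step f1 f2 H1 H2 t h v = U_X(t+h,t) v.\<close>
definition step_s1 :: "(real \<Rightarrow> real) \<Rightarrow> (real \<Rightarrow> real) \<Rightarrow> complex ^ ('n::finite) ^ 'n \<Rightarrow> complex ^ ('n::finite) ^ 'n \<Rightarrow> real \<Rightarrow> real \<Rightarrow> complex ^ ('n::finite) \<Rightarrow> complex ^ ('n::finite)" where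
  "step_s1 f1 f2 H1 H2 t h v =
     expm (- \<i> * of_real (f2 (t + h) * h)) H2 (expm (- \<i> * of_real (f1 (t + h) * h)) H1 v)"

definition step_g1 :: "(real \<Rightarrow> real) \<Rightarrow> (real \<Rightarrow> real) \<Rightarrow> complex ^ ('n::finite) ^ 'n \<Rightarrow> complex ^ ('n::finite) ^ 'n \<Rightarrow> real \<Rightarrow> real \<Rightarrow> complex ^ ('n::finite) \<Rightarrow> complex ^ ('n::finite)" where
  "step_g1 f1 f2 H1 H2 t h v =
     expm (- \<i> * of_real (integral {t..t+h} f2)) H2 (expm (- \<i> * of_real (integral {t..t+h} f1)) H1 v)"

definition step_s2 :: "(real \<Rightarrow> real) \<Rightarrow> (real \<Rightarrow> real) \<Rightarrow> complex ^ ('n::finite) ^ 'n \<Rightarrow> complex ^ ('n::finite) ^ 'n \<Rightarrow> real \<Rightarrow> real \<Rightarrow> complex ^ ('n::finite) \<Rightarrow> complex ^ ('n::finite)" where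
  "step_s2 f1 f2 H1 H2 t h v =
     expm (- \<i> * of_real (h / 2 * f1 (t + h / 2))) H1
       (expm (- \<i> * of_real (h * f2 (t + h / 2))) H2
         (expm (- \<i> * of_real (h / 2 * f1 (t + h / 2))) H1 v))"

definition step_g2 :: "(real \<Rightarrow> real) \<Rightarrow> (real \<Rightarrow> real) \<Rightarrow> complex ^ ('n::finite) ^ 'n \<Rightarrow> complex ^ ('n::finite) ^ 'n \<Rightarrow> real \<Rightarrow> real \<Rightarrow> complex ^ ('n::finite) \<Rightarrow> complex ^ ('n::finite)" where
  "step_g2 f1 f2 H1 H2 t h v =
     expm (- \<i> * of_real (integral {t+h/2..t+h} f1)) H1
       (expm (- \<i> * of_real (integral {t..t+h} f2)) H2
         (expm (- \<i> * of_real (integral {t..t+h/2} f1)) H1 v))"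

text \<open>Product formula: steps S k h v = S((k-1)h,h) ... S(0,h) v,
  i.e. U_X(kh,(k-1)h) ... U_X(h,0) v.\<close>
primrec steps :: "(real \<Rightarrow> real \<Rightarrow> 'a \<Rightarrow> 'a) \<Rightarrow> nat \<Rightarrow> real \<Rightarrow> 'a \<Rightarrow> 'a" where
  "steps S 0 h v = v"
| "steps S (Suc k) h v = S (real k * h) h (steps S k h v)"

end

theory Submission
  imports Defs
begin

type_synonym 'n cv = "complex ^ 'n"
type_synonym 'n cm = "complex ^ 'n ^ 'n"

definition ev :: "complex^'n^'n \<Rightarrow> real \<Rightarrow> complex^'n \<Rightarrow> complex^'n" where
  "ev A y v = expm (- \<i> * complex_of_real y) A v"

definition apow :: "complex^'n^'n \<Rightarrow> nat \<Rightarrow> complex^'n \<Rightarrow> complex^'n" where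
  "apow A k v = ((\<lambda>w. A *v w) ^^ k) v"

lemma apow_0[simp]: "apow A 0 v = v" by (simp add: apow_def)
lemma apow_Suc: "apow A (Suc k) v = A *v apow A k v" by (simp add: apow_def)

lemma norm_smult: "norm (c *s (v::complex^'n)) = norm c * norm v"
  by (simp add: norm_vec_def L2_set_right_distrib norm_mult)

lemma mv_smult: "(A::complex^'n^'m) *v (c *s v) = c *s (A *v v)"
  by (simp add: vec_eq_iff matrix_vector_mult_def sum_distrib_left ac_simps)

lemma opnorm_bound: "norm ((A::complex^'n^'n) *v v) \<le> opnorm A * norm v"
  unfolding opnorm_def by (rule onorm) simp

lemma opnorm_nonneg: "opnorm (A::complex^'n^'n) \<ge> 0"
  unfolding opnorm_def by (rule onorm_pos_le) simp

lemma apow_bound: "norm (apow A k v) \<le> opnorm A ^ k * norm v"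
proof (induction k)
  case 0 then show ?case by simp
next
  case (Suc k)
  have "norm (apow A (Suc k) v) \<le> opnorm A * norm (apow A k v)"
    by (simp add: apow_Suc opnorm_bound)
  also have "\<dots> \<le> opnorm A * (opnorm A ^ k * norm v)"
    using Suc opnorm_nonneg by (intro mult_left_mono) auto
  finally show ?case by (simp add: ac_simps)
qed

lemma expm_summable: "summable (\<lambda>k. (c ^ k / of_nat (fact k)) *s apow A k v)"
proof (rule summable_norm_cancel, rule summable_comparison_test')
  show "summable (\<lambda>k. (norm c * opnorm A) ^ k / fact k * norm v)"
  proof (intro summable_mult2)
    show "summable (\<lambda>k. (norm c * opnorm A) ^ k / fact k)"
      using summable_exp_generic[of "norm c * opnorm A"] by (simp add: divide_inverse ac_simps)
  qed
  fix k :: nat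
  have "norm ((c ^ k / of_nat (fact k)) *s apow A k v) = norm c ^ k / fact k * norm (apow A k v)"
    by (simp add: norm_smult norm_divide norm_power)
  also have "\<dots> \<le> norm c ^ k / fact k * (opnorm A ^ k * norm v)"
    by (intro mult_left_mono apow_bound) auto
  finally show "norm (norm ((c ^ k / of_nat (fact k)) *s apow A k v)) \<le> (norm c * opnorm A) ^ k / fact k * norm v"
    by (simp add: power_mult_distrib)
qed

lemma bl_smult_const: "bounded_linear (\<lambda>c::complex. c *s (w::complex^'n))"
proof (rule bounded_linear_intro[where K="norm w"])
  show "(x + y) *s w = x *s w + y *s w" for x y :: complex by (rule vector_sadd_rdistrib)
  show "(r *\<^sub>R x) *s w = r *\<^sub>R (x *s w)" for r and x :: complex
    by (simp add: vec_eq_iff)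
  show "norm (x *s w) \<le> norm x * norm w" for x :: complex by (simp add: norm_smult)
qed

lemma vec_has_vector_derivative:
  fixes f :: "real \<Rightarrow> complex^'n"
  assumes "\<And>j. ((\<lambda>x. f x $ j) has_vector_derivative (f' $ j)) F"
  shows "(f has_vector_derivative f') F"
proof -
  have eq: "f = (\<lambda>x. \<Sum>j\<in>UNIV. (f x $ j) *s axis j 1)"
    by (rule ext) (simp add: basis_expansion)
  have "((\<lambda>x. \<Sum>j\<in>UNIV. (f x $ j) *s axis j 1) has_vector_derivative (\<Sum>j\<in>UNIV. (f' $ j) *s axis j 1)) F"
    by (intro has_vector_derivative_sum bounded_linear.has_vector_derivative[OF bl_smult_const assms])
  then show ?thesis using eq basis_expansion[of f'] by simp
qed

lemma ev_expand: "ev A y v = (\<Sum>k. ((- \<i> * complex_of_real y) ^ k / of_nat (fact k)) *s apow A k v)"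
  by (simp add: ev_def expm_def apow_def)

lemma ev_component:
  "ev A y v $ j = (\<Sum>k. ((- \<i>) ^ k * apow A k v $ j / of_nat (fact k)) * (complex_of_real y) ^ k)"
  unfolding ev_expand
proof (subst bounded_linear.suminf[OF bounded_linear_vec_nth expm_summable], rule suminf_cong)
  fix k
  have p: "(- \<i> * complex_of_real y) ^ k = (- \<i>) ^ k * (complex_of_real y) ^ k"
    by (rule power_mult_distrib)
  show "(((- \<i> * complex_of_real y) ^ k / of_nat (fact k)) *s apow A k v) $ j =
    ((- \<i>) ^ k * apow A k v $ j / of_nat (fact k)) * (complex_of_real y) ^ k"
    unfolding vector_smult_component p by simp
qed

lemma ev_deriv_y: "((\<lambda>y. ev A y v) has_vector_derivative ((- \<i>) *s (A *v ev A y v))) (at y within S)"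
proof (rule vec_has_vector_derivative)
  fix j
  define c where "c k = (- \<i>) ^ k * apow A k v $ j / of_nat (fact k)" for k
  have summ: "summable (\<lambda>n. c n * z ^ n)" for z
  proof -
    have "summable (\<lambda>n. (((- \<i> * z) ^ n / of_nat (fact n)) *s apow A n v) $ j)"
      by (rule bounded_linear.summable[OF bounded_linear_vec_nth expm_summable])
    moreover have "c n * z^n = (((- \<i> * z) ^ n / of_nat (fact n)) *s apow A n v) $ j" for n
      unfolding vector_smult_component power_mult_distrib c_def by simp
    ultimately show ?thesis by simp
  qed
  have d: "((\<lambda>z. \<Sum>n. c n * z^n) has_field_derivative (\<Sum>n. diffs c n * z^n)) (at z)" for z
    by (rule termdiffs_strong'[where K="norm z + 1"]) (auto intro: summ)
  have e: "(\<lambda>y. ev A y v $ j) = (\<lambda>y. (\<lambda>z. \<Sum>n. c n * z^n) (complex_of_real y))"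
    by (simp add: ev_component c_def)
  have "((- \<i>) *s (A *v ev A y v)) $ j = (\<Sum>n. diffs c n * (complex_of_real y)^n)"
  proof -
    have s1: "summable (\<lambda>k. ((- \<i> * complex_of_real y) ^ k / of_nat (fact k)) *s apow A k v)"
      by (rule expm_summable)
    have s2: "summable (\<lambda>k. A *v (((- \<i> * complex_of_real y) ^ k / of_nat (fact k)) *s apow A k v))"
      by (rule bounded_linear.summable[OF matrix_vector_mul_bounded_linear s1])
    have "((- \<i>) *s (A *v ev A y v)) $ j = - \<i> * (\<Sum>k. (A *v (((- \<i> * complex_of_real y) ^ k / of_nat (fact k)) *s apow A k v)) $ j)"
      by (simp only: ev_expand bounded_linear.suminf[OF matrix_vector_mul_bounded_linear s1]
                    bounded_linear.suminf[OF bounded_linear_vec_nth s2] vector_smult_component)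
    also have "\<dots> = (\<Sum>k. - \<i> * (A *v (((- \<i> * complex_of_real y) ^ k / of_nat (fact k)) *s apow A k v)) $ j)"
      by (rule suminf_mult[symmetric], rule bounded_linear.summable[OF bounded_linear_vec_nth s2])
    also have "\<dots> = (\<Sum>n. diffs c n * (complex_of_real y)^n)"
    proof (rule suminf_cong)
      fix k
      have f: "of_nat (Suc k) / (of_nat (fact (Suc k))::complex) = 1 / of_nat (fact k)"
      proof -
        have "(of_nat (fact (Suc k))::complex) = of_nat (Suc k) * of_nat (fact k)"
          by (simp only: fact_Suc of_nat_mult of_nat_id)
        moreover have "(of_nat (Suc k)::complex) \<noteq> 0" by (metis Zero_not_Suc of_nat_eq_0_iff)
        moreover have "(of_nat (fact k)::complex) \<noteq> 0" by auto
        ultimately show ?thesis by (simp add: divide_simps)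
      qed
      have "diffs c k * (complex_of_real y)^k = (of_nat (Suc k) / of_nat (fact (Suc k))) * ((- \<i>) ^ Suc k * apow A (Suc k) v $ j) * (complex_of_real y)^k"
        by (simp add: diffs_def c_def)
      also have "\<dots> = (- \<i>) * ((- \<i>) ^ k * (complex_of_real y)^k / of_nat (fact k)) * apow A (Suc k) v $ j"
        unfolding f by simp
      also have "\<dots> = - \<i> * (A *v (((- \<i> * complex_of_real y) ^ k / of_nat (fact k)) *s apow A k v)) $ j"
        unfolding mv_smult vector_smult_component power_mult_distrib apow_Suc by simp
      finally show "- \<i> * (A *v (((- \<i> * complex_of_real y) ^ k / of_nat (fact k)) *s apow A k v)) $ j = diffs c k * (complex_of_real y)^k" by simp
    qed
    finally show ?thesis .
  qed
  then show "((\<lambda>y. ev A y v $ j) has_vector_derivative ((- \<i>) *s (A *v ev A y v)) $ j) (at y within S)"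
    unfolding e by (simp only:) (rule has_vector_derivative_real_field[OF d])
qed

lemma mvt:
  fixes f :: "real \<Rightarrow> 'b::real_normed_vector"
  assumes ab: "a \<le> b"
    and d: "\<And>x. x \<in> {a..b} \<Longrightarrow> (f has_vector_derivative f' x) (at x within {a..b})"
    and B: "\<And>x. x \<in> {a..b} \<Longrightarrow> norm (f' x) \<le> B"
  shows "norm (f b - f a) \<le> B * (b - a)"
proof -
  have "norm (f b - f a) \<le> B * norm (b - a)"
  proof (rule differentiable_bound[of "{a..b}" f "\<lambda>x h. h *\<^sub>R f' x"])
    show "convex {a..b}" by simp
    show "(f has_derivative (\<lambda>h. h *\<^sub>R f' x)) (at x within {a..b})" if "x \<in> {a..b}" for x
      using d[OF that] by (simp add: has_vector_derivative_def)
    show "onorm (\<lambda>h. h *\<^sub>R f' x) \<le> B" if "x \<in> {a..b}" for x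
    proof (rule onorm_le)
      fix h :: real
      show "norm (h *\<^sub>R f' x) \<le> B * norm h"
        using B[OF that] by (simp add: mult.commute) (metis abs_ge_zero mult.commute mult_left_mono)
    qed
  qed (use ab in auto)
  then show ?thesis using ab by simp
qed

lemma inner_complex_Re: "inner (a::complex) b = Re (a * cnj b)"
  by (simp add: inner_complex_def)

lemma inner_cvec: "inner (x::complex^'n) y = Re (\<Sum>i\<in>UNIV. x$i * cnj (y$i))"
  by (simp add: inner_vec_def inner_complex_Re Re_sum)

lemma inner_mv_adj: "inner ((A::complex^'n^'m) *v v) w = inner v (adj A *v w)"
proof -
  have "(\<Sum>i\<in>UNIV. (A *v v)$i * cnj (w$i)) = (\<Sum>i\<in>UNIV. \<Sum>j\<in>UNIV. A$i$j * v$j * cnj (w$i))"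
    by (simp add: matrix_vector_mult_def sum_distrib_right)
  also have "\<dots> = (\<Sum>j\<in>UNIV. \<Sum>i\<in>UNIV. A$i$j * v$j * cnj (w$i))"
    by (rule sum.swap)
  also have "\<dots> = (\<Sum>j\<in>UNIV. v$j * cnj ((adj A *v w)$j))"
    by (simp add: matrix_vector_mult_def adj_def sum_distrib_left ac_simps)
  finally show ?thesis by (simp add: inner_cvec)
qed

lemma herm_inner: "hermitian H \<Longrightarrow> inner (H *v v) w = inner v (H *v w)"
  by (simp add: inner_mv_adj hermitian_def)

lemma inner_i_left: "inner (c *s (v::complex^'n)) w = inner v (cnj c *s w)"
  by (simp add: inner_cvec ac_simps)

lemma mv_uminus: "(A::complex^'n^'m) *v (- v) = - (A *v v)"
  by (simp add: vec_eq_iff matrix_vector_mult_def sum_negf)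

lemma mv_add: "(A::complex^'n^'m) *v (v + w) = A *v v + A *v w"
  by (simp add: vec_eq_iff matrix_vector_mult_def sum.distrib distrib_left)

lemma mv_diff: "(A::complex^'n^'m) *v (v - w) = A *v v - A *v w"
  by (simp add: vec_eq_iff matrix_vector_mult_def sum_subtractf right_diff_distrib)

lemma mv_scaleR: "(A::complex^'n^'m) *v (r *\<^sub>R v) = r *\<^sub>R (A *v v)"
  by (simp add: vec_eq_iff matrix_vector_mult_def scaleR_sum_right)

lemma herm_skew: "hermitian H \<Longrightarrow> inner v (\<i> *s (H *v v)) = 0"
proof -
  assume h: "hermitian H"
  have "inner v (\<i> *s (H *v v)) = inner ((- \<i>) *s v) (H *v v)"
    by (simp add: inner_i_left)
  also have "\<dots> = inner (H *v ((- \<i>) *s v)) v"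
    by (simp only: herm_inner[OF h])
  also have "\<dots> = - inner v (\<i> *s (H *v v))"
    apply (simp add: mv_smult inner_i_left inner_commute vector_smult_lneg)
    apply (subst mv_uminus)
    apply (simp only: inner_minus_right)
    apply (subst mv_smult)
    apply (rule refl)
    done
  finally show ?thesis by simp
qed

lemma norm_conserv:
  fixes w :: "real \<Rightarrow> complex^'n"
  assumes ab: "a \<le> b"
    and d: "\<And>x. x \<in> {a..b} \<Longrightarrow> (w has_vector_derivative - (\<i> *s (B x *v w x))) (at x within {a..b})"
    and h: "\<And>x. x \<in> {a..b} \<Longrightarrow> hermitian (B x)"
    and x: "x \<in> {a..b}"
  shows "norm (w x) = norm (w a)"
proof -
  have "norm ((\<lambda>x. inner (w x) (w x)) x - (\<lambda>x. inner (w x) (w x)) a) \<le> 0 * (x - a)"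
  proof (rule mvt)
    show "a \<le> x" using x by auto
    fix y assume y: "y \<in> {a..x}"
    then have y': "y \<in> {a..b}" using x by auto
    have dd: "(w has_vector_derivative - (\<i> *s (B y *v w y))) (at y within {a..x})"
      by (rule has_vector_derivative_within_subset[OF d[OF y']]) (use x in auto)
    show "((\<lambda>x. inner (w x) (w x)) has_vector_derivative
      (inner (w y) (- (\<i> *s (B y *v w y))) + inner (- (\<i> *s (B y *v w y))) (w y))) (at y within {a..x})"
      by (rule bounded_bilinear.has_vector_derivative[OF bounded_bilinear_inner dd dd])
    have "inner (w y) (- (\<i> *s (B y *v w y))) = 0"
      using herm_skew[OF h[OF y'], of "w y"] by simp
    then show "norm (inner (w y) (- (\<i> *s (B y *v w y))) + inner (- (\<i> *s (B y *v w y))) (w y)) \<le> 0"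
      by (simp add: inner_commute)
  qed
  then have "inner (w x) (w x) = inner (w a) (w a)" by simp
  then show ?thesis by (simp add: norm_eq_sqrt_inner)
qed


lemma ev_deriv: "((\<lambda>y. ev A y v) has_vector_derivative - (\<i> *s (A *v ev A y v))) (at y within S)"
  using ev_deriv_y[of A v y S] by simp

lemma ev_0[simp]: "ev A 0 v = v"
proof -
  have "(\<lambda>k. ((- \<i> * complex_of_real 0) ^ k / of_nat (fact k)) *s apow A k v) = (\<lambda>k. if k = 0 then apow A k v else 0)"
    by (auto simp: fun_eq_iff)
  then show ?thesis unfolding ev_expand using sums_single[of 0 "\<lambda>k. apow A k v"]
    by (simp add: sums_iff)
qed

lemma bl_smult_left: "bounded_linear (\<lambda>x::complex^'n. c *s x)"
proof (rule bounded_linear_intro[where K="norm c"])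
  show "c *s (x + y) = c *s x + c *s y" for x y :: "complex^'n" by (rule vector_add_ldistrib)
  show "c *s (r *\<^sub>R x) = r *\<^sub>R (c *s x)" for r and x :: "complex^'n"
    by (simp add: vec_eq_iff)
  show "norm (c *s x) \<le> norm x * norm c" for x :: "complex^'n" by (simp add: norm_smult)
qed

lemma ode_zero:
  fixes D :: "real \<Rightarrow> complex^'n"
  assumes h: "hermitian A"
    and d: "\<And>y. (D has_vector_derivative - (\<i> *s (A *v D y))) (at y)"
    and D0: "D 0 = 0"
  shows "D y = 0"
proof -
  have n: "norm (D x) = norm (D (- \<bar>y\<bar>))" if "x \<in> {- \<bar>y\<bar>..\<bar>y\<bar>}" for x
    by (rule norm_conserv[where B="\<lambda>_. A" and b="\<bar>y\<bar>"])
       (use that h in \<open>auto intro: has_vector_derivative_at_within[OF d]\<close>)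
  have y1: "y \<in> {- \<bar>y\<bar>..\<bar>y\<bar>}" "0 \<in> {- \<bar>y\<bar>..\<bar>y\<bar>}" by auto
  have "norm (D y) = norm (D 0)" using n[OF y1(1)] n[OF y1(2)] by simp
  then show ?thesis using D0 by simp
qed

lemma ev_norm: "hermitian A \<Longrightarrow> norm (ev A y v) = norm v"
proof -
  assume h: "hermitian A"
  have n: "norm (ev A x v) = norm (ev A (- \<bar>y\<bar>) v)" if "x \<in> {- \<bar>y\<bar>..\<bar>y\<bar>}" for x
    by (rule norm_conserv[where B="\<lambda>_. A" and b="\<bar>y\<bar>" and w="\<lambda>y. ev A y v"])
       (use that h in \<open>auto intro: ev_deriv\<close>)
  have y1: "y \<in> {- \<bar>y\<bar>..\<bar>y\<bar>}" "0 \<in> {- \<bar>y\<bar>..\<bar>y\<bar>}" by auto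
  show ?thesis using n[OF y1(1)] n[OF y1(2)] by simp
qed

lemma ev_add: assumes h: "hermitian A" shows "ev A y (v + w) = ev A y v + ev A y w"
proof -
  have "(\<lambda>y. ev A y (v + w) - ev A y v - ev A y w) y = 0"
  proof (rule ode_zero[OF h])
    fix y
    show "((\<lambda>y. ev A y (v + w) - ev A y v - ev A y w) has_vector_derivative
      - (\<i> *s (A *v (ev A y (v + w) - ev A y v - ev A y w)))) (at y)"
      by (rule has_vector_derivative_eq_rhs[OF has_vector_derivative_diff[OF has_vector_derivative_diff[OF ev_deriv ev_deriv] ev_deriv]])
         (simp add: mv_diff vector_ssub_ldistrib algebra_simps)
  qed simp
  then show ?thesis by (simp add: algebra_simps)
qed

lemma ev_smult: assumes h: "hermitian A" shows "ev A y (c *s v) = c *s ev A y v"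
proof -
  have "(\<lambda>y. ev A y (c *s v) - c *s ev A y v) y = 0"
  proof (rule ode_zero[OF h])
    fix y
    have d2: "((\<lambda>y. c *s ev A y v) has_vector_derivative c *s (- (\<i> *s (A *v ev A y v)))) (at y)"
      by (rule bounded_linear.has_vector_derivative[OF bl_smult_left ev_deriv])
    show "((\<lambda>y. ev A y (c *s v) - c *s ev A y v) has_vector_derivative
      - (\<i> *s (A *v (ev A y (c *s v) - c *s ev A y v)))) (at y)"
      by (rule has_vector_derivative_eq_rhs[OF has_vector_derivative_diff[OF ev_deriv d2]])
         (simp add: mv_diff vector_ssub_ldistrib mv_smult vector_smult_assoc mult.commute algebra_simps)
  qed simp
  then show ?thesis by simp
qed

lemma ev_comm: assumes h: "hermitian A" shows "A *v ev A y v = ev A y (A *v v)"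
proof -
  have "(\<lambda>y. A *v ev A y v - ev A y (A *v v)) y = 0"
  proof (rule ode_zero[OF h])
    fix y
    have d2: "((\<lambda>y. A *v ev A y v) has_vector_derivative A *v (- (\<i> *s (A *v ev A y v)))) (at y)"
      by (rule bounded_linear.has_vector_derivative[OF matrix_vector_mul_bounded_linear ev_deriv])
    show "((\<lambda>y. A *v ev A y v - ev A y (A *v v)) has_vector_derivative
      - (\<i> *s (A *v (A *v ev A y v - ev A y (A *v v))))) (at y)"
      by (rule has_vector_derivative_eq_rhs[OF has_vector_derivative_diff[OF d2 ev_deriv]])
         (simp add: mv_diff vector_ssub_ldistrib mv_smult mv_uminus algebra_simps)
  qed simp
  then show ?thesis by simp
qed

lemma ev_group: assumes h: "hermitian A" shows "ev A y (ev A z v) = ev A (y + z) v"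
proof -
  have "(\<lambda>y. ev A y (ev A z v) - ev A (y + z) v) y = 0"
  proof (rule ode_zero[OF h, of "\<lambda>y. ev A y (ev A z v) - ev A (y + z) v"])
    fix y
    have d2: "((\<lambda>y. ev A (y + z) v) has_vector_derivative - (\<i> *s (A *v ev A (y + z) v))) (at y)"
    proof -
      have "(((\<lambda>u. ev A u v) \<circ> (\<lambda>y. y + z)) has_vector_derivative (1 *\<^sub>R (- (\<i> *s (A *v ev A (y + z) v))))) (at y)"
        by (rule vector_diff_chain_within[OF _ ev_deriv]) (auto intro!: derivative_eq_intros)
      then show ?thesis by (simp add: o_def)
    qed
    show "((\<lambda>y. ev A y (ev A z v) - ev A (y + z) v) has_vector_derivative
      - (\<i> *s (A *v (ev A y (ev A z v) - ev A (y + z) v)))) (at y)"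
      by (rule has_vector_derivative_eq_rhs[OF has_vector_derivative_diff[OF ev_deriv d2]])
         (simp add: mv_diff vector_ssub_ldistrib algebra_simps)
  qed simp
  then show ?thesis by simp
qed


lemma ev_zero[simp]: "hermitian A \<Longrightarrow> ev A y 0 = 0"
  using ev_norm[of A y 0] by simp

lemma ev_uminus: "hermitian A \<Longrightarrow> ev A y (- v) = - ev A y v"
  using ev_add[of A y v "- v"] by (simp add: eq_neg_iff_add_eq_0 add.commute)

lemma ev_diff: "hermitian A \<Longrightarrow> ev A y (v - w) = ev A y v - ev A y w"
  using ev_add[of A y v "- w"] ev_uminus[of A y w] by simp

lemma scaleR_smult: "r *\<^sub>R (v::complex^'n) = complex_of_real r *s v"
  unfolding vec_eq_iff vector_scaleR_component vector_smult_component by (simp add: scaleR_conv_of_real)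

lemma ev_scaleR: "hermitian A \<Longrightarrow> ev A y (r *\<^sub>R v) = r *\<^sub>R ev A y v"
  by (simp add: scaleR_smult ev_smult)

lemma ev_inv1: "hermitian A \<Longrightarrow> ev A (- y) (ev A y v) = v"
  by (simp add: ev_group)

lemma ev_inv2: "hermitian A \<Longrightarrow> ev A y (ev A (- y) v) = v"
  by (simp add: ev_group)

lemma ev_bl: "hermitian A \<Longrightarrow> bounded_linear (ev A y)"
  by (rule bounded_linear_intro[where K=1]) (auto simp: ev_add ev_scaleR ev_norm)

lemma clin_expand:
  assumes bl: "bounded_linear (L :: complex^'n \<Rightarrow> complex^'n)" and c: "\<And>c w. L (c *s w) = c *s L w"
  shows "L u = (\<Sum>j\<in>UNIV. (u$j) *s L (axis j 1))"
proof -
  have "L u = L (\<Sum>j\<in>UNIV. (u$j) *s axis j 1)" by (simp add: basis_expansion)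
  also have "\<dots> = (\<Sum>j\<in>UNIV. L ((u$j) *s axis j 1))"
    by (rule linear_sum[OF bounded_linear.linear[OF bl]])
  also have "\<dots> = (\<Sum>j\<in>UNIV. (u$j) *s L (axis j 1))" by (simp add: c)
  finally show ?thesis .
qed

lemma bb_smult: "bounded_bilinear (\<lambda>(c::complex) (w::complex^'n). c *s w)"
proof -
  have "bilinear (\<lambda>(c::complex) (w::complex^'n). c *s w)"
    unfolding bilinear_def
    by (auto intro!: bounded_linear.linear bl_smult_left bl_smult_const)
  then show ?thesis by (simp add: bilinear_conv_bounded_bilinear)
qed

lemma ev_deriv_joint:
  assumes h: "hermitian A"
    and dx: "(x has_real_derivative x') (at t within S)"
    and du: "(u has_vector_derivative u') (at t within S)"
  shows "((\<lambda>t. ev A (x t) (u t)) has_vector_derivative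
           (ev A (x t) u' - x' *\<^sub>R (\<i> *s (A *v ev A (x t) (u t))))) (at t within S)"
proof -
  define L where "L w = x' *\<^sub>R (- (\<i> *s (A *v ev A (x t) w)))" for w
  have blL: "bounded_linear L"
    unfolding L_def
    by (intro bounded_linear_compose[OF bounded_linear_scaleR_right]
              bounded_linear_compose[OF bounded_linear_minus[OF bounded_linear_ident]]
              bounded_linear_compose[OF bl_smult_left]
              bounded_linear_compose[OF matrix_vector_mul_bounded_linear] ev_bl h)
  have cL: "L (c *s w) = c *s L w" for c w
    by (simp add: L_def ev_smult[OF h] mv_smult vector_smult_assoc scaleR_smult mult.commute mult.left_commute vector_smult_rneg)
  have e: "ev A (x s) (u s) = (\<Sum>j\<in>UNIV. (u s $ j) *s ev A (x s) (axis j 1))" for s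
    by (rule clin_expand[OF ev_bl[OF h] ev_smult[OF h]])
  have dj: "((\<lambda>s. (u s $ j) *s ev A (x s) (axis j 1)) has_vector_derivative
      (u t $ j) *s (x' *\<^sub>R (- (\<i> *s (A *v ev A (x t) (axis j 1))))) + (u' $ j) *s ev A (x t) (axis j 1)) (at t within S)" for j
  proof (rule bounded_bilinear.has_vector_derivative[OF bb_smult])
    show "((\<lambda>s. u s $ j) has_vector_derivative u' $ j) (at t within S)"
      by (rule bounded_linear.has_vector_derivative[OF bounded_linear_vec_nth du])
    have "(((\<lambda>y. ev A y (axis j 1)) \<circ> x) has_vector_derivative (x' *\<^sub>R (- (\<i> *s (A *v ev A (x t) (axis j 1)))))) (at t within S)"
      by (rule vector_diff_chain_within[OF dx[unfolded has_real_derivative_iff_has_vector_derivative] ev_deriv])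
    then show "((\<lambda>s. ev A (x s) (axis j 1)) has_vector_derivative (x' *\<^sub>R (- (\<i> *s (A *v ev A (x t) (axis j 1)))))) (at t within S)"
      by (simp add: o_def)
  qed
  have "((\<lambda>s. \<Sum>j\<in>UNIV. (u s $ j) *s ev A (x s) (axis j 1)) has_vector_derivative
      (\<Sum>j\<in>UNIV. (u t $ j) *s L (axis j 1) + (u' $ j) *s ev A (x t) (axis j 1))) (at t within S)"
    by (rule has_vector_derivative_sum) (use dj in \<open>simp add: L_def\<close>)
  moreover have "(\<Sum>j\<in>UNIV. (u t $ j) *s L (axis j 1) + (u' $ j) *s ev A (x t) (axis j 1))
      = ev A (x t) u' - x' *\<^sub>R (\<i> *s (A *v ev A (x t) (u t)))"
  proof -
    have 1: "(\<Sum>j\<in>UNIV. (u t $ j) *s L (axis j 1)) = L (u t)"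
      using clin_expand[OF blL cL, of "u t"] by simp
    have 2: "(\<Sum>j\<in>UNIV. (u' $ j) *s ev A (x t) (axis j 1)) = ev A (x t) u'"
      using clin_expand[OF ev_bl[OF h] ev_smult[OF h], of "x t" u'] by simp
    show ?thesis unfolding sum.distrib 1 2 by (simp add: L_def)
  qed
  ultimately show ?thesis using e by simp
qed




lemma mvt_ab:
  fixes f :: "real \<Rightarrow> 'b::real_normed_vector"
  assumes d: "\<And>x. x \<in> {min a b..max a b} \<Longrightarrow> (f has_vector_derivative f' x) (at x within {min a b..max a b})"
    and B: "\<And>x. x \<in> {min a b..max a b} \<Longrightarrow> norm (f' x) \<le> Bd"
  shows "norm (f b - f a) \<le> Bd * \<bar>b - a\<bar>"
proof (cases "a \<le> b")
  case True
  then show ?thesis using mvt[of a b f f' Bd] d B by (simp add: min_def max_def)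
next
  case False
  then have "norm (f a - f b) \<le> Bd * (a - b)" using mvt[of b a f f' Bd] d B by (simp add: min_def max_def)
  then show ?thesis using False by (simp add: norm_minus_commute)
qed

lemma comm_apply: "comm A B *v v = A *v (B *v v) - B *v (A *v v)"
  by (simp add: comm_def matrix_vector_mult_diff_rdistrib matrix_vector_mul_assoc)

lemma comm_swap: "comm B A *v v = - (comm A B *v v)"
  by (simp add: comm_apply)

lemma ev_minus_deriv:
  assumes h: "hermitian A"
  shows "((\<lambda>s. ev A (- s) w) has_vector_derivative \<i> *s (A *v ev A (- s) w)) (at s within S)"
proof -
  have "((\<lambda>s. ev A (- s) ((\<lambda>_. w) s)) has_vector_derivative
      (ev A (- s) 0 - (- 1) *\<^sub>R (\<i> *s (A *v ev A (- s) w)))) (at s within S)"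
    by (rule ev_deriv_joint[OF h]) (auto intro!: derivative_eq_intros)
  then show ?thesis using h by simp
qed

lemma conj_deriv:
  assumes h: "hermitian A"
  shows "((\<lambda>s. ev A s (B *v ev A (- s) w)) has_vector_derivative
     - (\<i> *s ev A s (comm A B *v ev A (- s) w))) (at s within S)"
proof -
  have du: "((\<lambda>s. B *v ev A (- s) w) has_vector_derivative B *v (\<i> *s (A *v ev A (- s) w))) (at s within S)"
    by (rule bounded_linear.has_vector_derivative[OF matrix_vector_mul_bounded_linear ev_minus_deriv[OF h]])
  have "((\<lambda>s. ev A s (B *v ev A (- s) w)) has_vector_derivative
     (ev A s (B *v (\<i> *s (A *v ev A (- s) w))) - 1 *\<^sub>R (\<i> *s (A *v ev A s (B *v ev A (- s) w))))) (at s within S)"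
    by (rule ev_deriv_joint[OF h _ du]) (auto intro!: derivative_eq_intros)
  moreover have "ev A s (B *v (\<i> *s (A *v ev A (- s) w))) - 1 *\<^sub>R (\<i> *s (A *v ev A s (B *v ev A (- s) w)))
     = - (\<i> *s ev A s (comm A B *v ev A (- s) w))"
    by (simp add: comm_apply mv_smult ev_smult[OF h] ev_comm[OF h] ev_diff[OF h] vector_ssub_ldistrib)
  ultimately show ?thesis by simp
qed

lemma conj_bound:
  assumes h: "hermitian A"
    and Bd: "\<And>s. \<bar>s\<bar> \<le> \<bar>t\<bar> \<Longrightarrow> norm (comm A B *v ev A s w) \<le> Bd"
  shows "norm (ev A t (B *v ev A (- t) w) - B *v w) \<le> Bd * \<bar>t\<bar>"
proof -
  have "norm ((\<lambda>s. ev A s (B *v ev A (- s) w)) t - (\<lambda>s. ev A s (B *v ev A (- s) w)) 0) \<le> Bd * \<bar>t - 0\<bar>"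
  proof (rule mvt_ab[OF conj_deriv[OF h]])
    fix s assume s: "s \<in> {min 0 t..max 0 t}"
    have "norm (- (\<i> *s ev A s (comm A B *v ev A (- s) w))) = norm (comm A B *v ev A (- s) w)"
      by (simp add: norm_smult ev_norm[OF h])
    also have "\<dots> \<le> Bd" using s by (intro Bd) (auto simp: min_def max_def split: if_splits)
    finally show "norm (- (\<i> *s ev A s (comm A B *v ev A (- s) w))) \<le> Bd" .
  qed
  then show ?thesis using h by simp
qed

lemma ev_lip:
  assumes h: "hermitian A"
  shows "norm (ev A x v - ev A y v) \<le> norm (A *v v) * \<bar>x - y\<bar>"
proof (rule mvt_ab[OF ev_deriv])
  fix s
  show "norm (- (\<i> *s (A *v ev A s v))) \<le> norm (A *v v)"
    by (simp add: norm_smult ev_comm[OF h] ev_norm[OF h])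
qed



locale ham =
  fixes H1 H2 D1 :: "complex^'n::finite^'n" and C1 C2 :: real
  assumes h1: "hermitian H1" and h2: "hermitian H2"
    and d1: "H1 = adj D1 ** D1"
    and cb1: "\<And>v. norm (comm H1 H2 *v v) \<le> C1 * (norm (D1 *v v) + norm v)"
    and cb2: "\<And>v. norm (comm H1 (comm H1 H2) *v v) \<le> C2 * (norm (H1 *v v) + norm v)"
    and C1: "C1 \<ge> 0" and C2: "C2 \<ge> 0"
begin

lemma N_sq: "(norm (D1 *v v))^2 = inner v (H1 *v v)"
  by (simp add: d1 power2_norm_eq_inner inner_mv_adj matrix_vector_mul_assoc[symmetric])

lemma N_le_sqrt: "norm (D1 *v v) \<le> sqrt (norm v * norm (H1 *v v))"
proof -
  have "(norm (D1 *v v))^2 \<le> norm v * norm (H1 *v v)"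
    unfolding N_sq by (rule norm_cauchy_schwarz)
  then show ?thesis by (simp add: real_le_rsqrt)
qed

lemma N_le: "norm (D1 *v v) \<le> (norm v + norm (H1 *v v)) / 2"
  using N_le_sqrt[of v] arith_geo_mean_sqrt[of "norm v" "norm (H1 *v v)"] by simp

lemma N_E2: "norm (D1 *v ev H2 t w) \<le> norm (D1 *v w) + norm w * (1 + C1 * \<bar>t\<bar>)"
proof (cases "w = 0")
  case True
  then show ?thesis using h2 by simp
next
  case False
  define r where "r = norm w"
  have r: "r > 0" using False by (simp add: r_def)
  define x where "x s = ev H2 s w" for s
  have nx: "norm (x s) = r" for s by (simp add: x_def r_def ev_norm[OF h2])
  define g where "g s = inner (x s) (H1 *v x s) + r^2" for s
  have gN: "g s = (norm (D1 *v x s))^2 + r^2" for s by (simp add: g_def N_sq)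
  have gpos: "g s > 0" for s unfolding gN using r by (simp add: add_nonneg_pos)
  have sqg: "norm (D1 *v x s) \<le> sqrt (g s)" "r \<le> sqrt (g s)" for s
    unfolding gN by (simp_all add: real_le_rsqrt)
  define g' where "g' s = inner (x s) (H1 *v (- (\<i> *s (H2 *v x s)))) + inner (- (\<i> *s (H2 *v x s))) (H1 *v x s)" for s
  have dx: "(x has_vector_derivative - (\<i> *s (H2 *v x s))) (at s within S)" for s S
    unfolding x_def by (rule ev_deriv)
  have dg: "(g has_real_derivative g' s) (at s within S)" for s S
  proof -
    have "((\<lambda>s. inner (x s) (H1 *v x s)) has_vector_derivative g' s) (at s within S)"
      unfolding g'_def
      by (rule bounded_bilinear.has_vector_derivative[OF bounded_bilinear_inner dx
            bounded_linear.has_vector_derivative[OF matrix_vector_mul_bounded_linear dx]])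
    then have "(g has_vector_derivative g' s + 0) (at s within S)"
      unfolding g_def by (intro has_vector_derivative_add) auto
    then show ?thesis by (simp add: has_real_derivative_iff_has_vector_derivative)
  qed
  have g'eq: "g' s = - inner (x s) (\<i> *s (comm H1 H2 *v x s))" for s
  proof -
    have 1: "inner (- (\<i> *s (H2 *v x s))) (H1 *v x s) = inner (x s) (\<i> *s (H2 *v (H1 *v x s)))"
    proof -
      have "inner (- (\<i> *s (H2 *v x s))) (H1 *v x s) = - inner (H2 *v x s) ((- \<i>) *s (H1 *v x s))"
        by (simp add: inner_i_left)
      also have "\<dots> = - inner (x s) (H2 *v ((- \<i>) *s (H1 *v x s)))"
        by (simp only: herm_inner[OF h2])
      also have "\<dots> = inner (x s) (\<i> *s (H2 *v (H1 *v x s)))"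
        by (subst mv_smult) simp
      finally show ?thesis .
    qed
    have 2: "inner (x s) (H1 *v (- (\<i> *s (H2 *v x s)))) = - inner (x s) (\<i> *s (H1 *v (H2 *v x s)))"
      by (simp add: mv_uminus) (subst mv_smult, simp)
    show ?thesis unfolding g'_def 1 2
      by (simp add: comm_apply vector_ssub_ldistrib inner_diff_right)
  qed
  have g'b: "\<bar>g' s\<bar> \<le> r * C1 * (norm (D1 *v x s) + r)" for s
  proof -
    have "\<bar>g' s\<bar> \<le> norm (x s) * norm (\<i> *s (comm H1 H2 *v x s))"
      unfolding g'eq abs_minus_cancel by (rule Cauchy_Schwarz_ineq2)
    also have "\<dots> = r * norm (comm H1 H2 *v x s)" by (simp add: nx norm_smult)
    also have "\<dots> \<le> r * (C1 * (norm (D1 *v x s) + r))"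
      using cb1[of "x s"] r nx by (intro mult_left_mono) auto
    finally show ?thesis by (simp add: ac_simps)
  qed
  define q where "q s = sqrt (g s)" for s
  have dq: "(q has_real_derivative (inverse (sqrt (g s)) / 2 * g' s)) (at s within S)" for s S
    unfolding q_def by (rule DERIV_chain2[OF DERIV_real_sqrt[OF gpos] dg])
  have qb: "norm (q t - q 0) \<le> (r * C1) * \<bar>t - 0\<bar>"
  proof (rule mvt_ab)
    fix s
    show "(q has_vector_derivative (inverse (sqrt (g s)) / 2 * g' s)) (at s within {min 0 t..max 0 t})"
      using dq by (simp add: has_real_derivative_iff_has_vector_derivative)
    have sp: "sqrt (g s) > 0" using gpos by simp
    have "\<bar>inverse (sqrt (g s)) / 2 * g' s\<bar> = \<bar>g' s\<bar> / (2 * sqrt (g s))"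
      using sp by (simp add: abs_mult field_simps)
    also have "\<dots> \<le> r * C1 * (norm (D1 *v x s) + r) / (2 * sqrt (g s))"
      using g'b sp by (intro divide_right_mono) auto
    also have "\<dots> \<le> r * C1 * (2 * sqrt (g s)) / (2 * sqrt (g s))"
      using sqg[of s] sp r C1 by (intro divide_right_mono mult_left_mono) auto
    also have "\<dots> = r * C1" using sp by simp
    finally show "norm (inverse (sqrt (g s)) / 2 * g' s) \<le> r * C1" by simp
  qed
  have "norm (D1 *v x t) \<le> q t" using sqg by (simp add: q_def)
  also have "\<dots> \<le> q 0 + r * C1 * \<bar>t\<bar>" using qb by simp
  also have "q 0 \<le> norm (D1 *v w) + r"
    unfolding q_def gN x_def using r
    by (simp add: ev_0) (rule sqrt_add_le_add_sqrt[THEN order_trans]; simp)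
  finally show ?thesis by (simp add: x_def r_def algebra_simps)
qed


lemma comm_E2: "norm (ev H2 (- t) (H1 *v ev H2 t w) - H1 *v w) \<le> C1 * (norm (D1 *v w) + norm w * (2 + C1 * \<bar>t\<bar>)) * \<bar>t\<bar>"
proof -
  have "norm (ev H2 (- t) (H1 *v ev H2 (- (- t)) w) - H1 *v w) \<le> C1 * (norm (D1 *v w) + norm w * (2 + C1 * \<bar>t\<bar>)) * \<bar>- t\<bar>"
  proof (rule conj_bound[OF h2])
    fix s assume s: "\<bar>s\<bar> \<le> \<bar>- t\<bar>"
    have "norm (comm H2 H1 *v ev H2 s w) = norm (comm H1 H2 *v ev H2 s w)"
      by (simp only: comm_swap[of H2 H1] norm_minus_cancel)
    also have "\<dots> \<le> C1 * (norm (D1 *v ev H2 s w) + norm (ev H2 s w))" by (rule cb1)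
    also have "\<dots> \<le> C1 * (norm (D1 *v w) + norm w * (1 + C1 * \<bar>s\<bar>) + norm w)"
      using N_E2[of s w] C1 by (intro mult_left_mono) (auto simp: ev_norm[OF h2])
    also have "\<dots> \<le> C1 * (norm (D1 *v w) + norm w * (2 + C1 * \<bar>t\<bar>))"
    proof -
      have "C1 * \<bar>s\<bar> \<le> C1 * \<bar>t\<bar>" using s C1 by (simp add: mult_left_mono)
      then have "norm w * (C1 * \<bar>s\<bar>) \<le> norm w * (C1 * \<bar>t\<bar>)" by (simp add: mult_left_mono)
      then have m: "norm w * (1 + C1 * \<bar>s\<bar>) + norm w \<le> norm w * (2 + C1 * \<bar>t\<bar>)"
        by (simp add: algebra_simps)
      show ?thesis using m C1 by (intro mult_left_mono) linarith+
    qed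
    finally show "norm (comm H2 H1 *v ev H2 s w) \<le> C1 * (norm (D1 *v w) + norm w * (2 + C1 * \<bar>t\<bar>))" .
  qed
  then show ?thesis by simp
qed

lemma H1_E2: "norm (H1 *v ev H2 t w) \<le> norm (H1 *v w) + C1 * (norm (D1 *v w) + norm w * (2 + C1 * \<bar>t\<bar>)) * \<bar>t\<bar>"
proof -
  have "norm (H1 *v ev H2 t w) = norm (ev H2 (- t) (H1 *v ev H2 t w))" by (simp add: ev_norm[OF h2])
  also have "\<dots> \<le> norm (H1 *v w) + norm (ev H2 (- t) (H1 *v ev H2 t w) - H1 *v w)"
    by (rule norm_triangle_sub)
  also have "\<dots> \<le> norm (H1 *v w) + C1 * (norm (D1 *v w) + norm w * (2 + C1 * \<bar>t\<bar>)) * \<bar>t\<bar>"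
    using comm_E2 by simp
  finally show ?thesis .
qed

lemma H1_E1: "norm (H1 *v ev H1 t w) = norm (H1 *v w)"
  by (simp add: ev_comm[OF h1] ev_norm[OF h1])

lemma K2: "norm (ev H1 t (H2 *v ev H1 (- t) w) - H2 *v w + t *\<^sub>R (\<i> *s (comm H1 H2 *v w)))
    \<le> C2 * (norm (H1 *v w) + norm w) * t^2"
proof -
  define C where "C = comm H1 H2"
  define f where "f s = ev H1 s (H2 *v ev H1 (- s) w) + s *\<^sub>R (\<i> *s (C *v w))" for s
  have df: "(f has_vector_derivative - (\<i> *s (ev H1 s (C *v ev H1 (- s) w) - C *v w))) (at s within S)" for s S
  proof -
    have d2: "((\<lambda>s. s *\<^sub>R (\<i> *s (C *v w))) has_vector_derivative (s *\<^sub>R 0 + 1 *\<^sub>R (\<i> *s (C *v w)))) (at s within S)"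
      by (rule has_vector_derivative_scaleR) (auto intro!: derivative_eq_intros)
    have "(f has_vector_derivative - (\<i> *s ev H1 s (C *v ev H1 (- s) w)) + (s *\<^sub>R 0 + 1 *\<^sub>R (\<i> *s (C *v w)))) (at s within S)"
      unfolding f_def C_def
      by (rule has_vector_derivative_add[OF conj_deriv[OF h1] d2[unfolded C_def]])
    then show ?thesis by (simp add: vector_ssub_ldistrib)
  qed
  have "norm (f t - f 0) \<le> (C2 * (norm (H1 *v w) + norm w) * \<bar>t\<bar>) * \<bar>t - 0\<bar>"
  proof (rule mvt_ab[OF df])
    fix s assume s: "s \<in> {min 0 t..max 0 t}"
    have "norm (- (\<i> *s (ev H1 s (C *v ev H1 (- s) w) - C *v w))) = norm (ev H1 s (C *v ev H1 (- s) w) - C *v w)"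
      by (simp only: norm_minus_cancel norm_smult) simp
    also have "\<dots> \<le> C2 * (norm (H1 *v w) + norm w) * \<bar>s\<bar>"
    proof (rule conj_bound[OF h1])
      fix s'
      show "norm (comm H1 C *v ev H1 s' w) \<le> C2 * (norm (H1 *v w) + norm w)"
        using cb2[of "ev H1 s' w"] by (simp add: C_def H1_E1 ev_norm[OF h1])
    qed
    also have "\<dots> \<le> C2 * (norm (H1 *v w) + norm w) * \<bar>t\<bar>"
      using s C2 by (intro mult_left_mono) (auto simp: min_def max_def split: if_splits)
    finally show "norm (- (\<i> *s (ev H1 s (C *v ev H1 (- s) w) - C *v w))) \<le> C2 * (norm (H1 *v w) + norm w) * \<bar>t\<bar>" .
  qed
  moreover have "f t - f 0 = ev H1 t (H2 *v ev H1 (- t) w) - H2 *v w + t *\<^sub>R (\<i> *s (comm H1 H2 *v w))"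
    by (simp add: f_def C_def)
  moreover have "(C2 * (norm (H1 *v w) + norm w) * \<bar>t\<bar>) * \<bar>t - 0\<bar> = C2 * (norm (H1 *v w) + norm w) * t^2"
  proof -
    have "\<bar>t\<bar> * \<bar>t\<bar> = t^2" by (simp add: power2_eq_square abs_mult_self)
    then show ?thesis by (simp only: diff_zero mult.assoc)
  qed
  ultimately show ?thesis by metis
qed

end



definition J :: "complex^'n \<Rightarrow> complex^'n" where "J v = \<i> *s v"

lemma J_add: "J (v + w) = J v + J w" by (simp add: J_def vector_add_ldistrib)
lemma J_diff: "J (v - w) = J v - J w" by (simp add: J_def vector_ssub_ldistrib)
lemma J_minus: "J (- v) = - J v" by (simp add: J_def)
lemma J_scaleR: "J (r *\<^sub>R v) = r *\<^sub>R J v" by (simp add: J_def vec_eq_iff)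
lemma J_J: "J (J v) = - v" by (simp add: J_def vec_eq_iff)
lemma J_zero: "J 0 = 0" by (simp add: J_def)
lemma norm_J: "norm (J v) = norm v" by (simp add: J_def norm_smult)
lemma mv_J: "A *v J v = J (A *v v)" by (simp add: J_def mv_smult)
lemma ev_J: "hermitian A \<Longrightarrow> ev A y (J v) = J (ev A y v)" by (simp add: J_def ev_smult)
lemma bl_J: "bounded_linear J" unfolding J_def by (rule bl_smult_left)

lemmas J_simps = J_add J_diff J_minus J_scaleR J_J J_zero mv_J

lemma mv_scaleR_left: "((r::real) *\<^sub>R A) *v (v::complex^'n) = r *\<^sub>R (A *v v)"
  by (simp add: vec_eq_iff matrix_vector_mult_def scaleR_sum_right)

lemma adj_add: "adj (A + B) = adj A + adj B" by (simp add: adj_def vec_eq_iff)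
lemma adj_scaleR: "adj ((r::real) *\<^sub>R A) = r *\<^sub>R adj A" by (simp add: adj_def vec_eq_iff)

lemma herm_comb: "hermitian A \<Longrightarrow> hermitian B \<Longrightarrow> hermitian ((r::real) *\<^sub>R A + (s::real) *\<^sub>R B)"
  by (simp add: hermitian_def adj_add adj_scaleR)

lemma ev_deriv_J:
  assumes h: "hermitian A"
    and dx: "(x has_real_derivative x') (at t within S)"
    and du: "(u has_vector_derivative u') (at t within S)"
  shows "((\<lambda>t. ev A (x t) (u t)) has_vector_derivative
           (ev A (x t) u' - x' *\<^sub>R J (A *v ev A (x t) (u t)))) (at t within S)"
  using ev_deriv_joint[OF h dx du] by (simp add: J_def)

lemma mvt_real:
  fixes f :: "real \<Rightarrow> real"
  assumes d: "\<And>x. x \<in> {min a b..max a b} \<Longrightarrow> (f has_real_derivative f' x) (at x within {min a b..max a b})"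
    and B: "\<And>x. x \<in> {min a b..max a b} \<Longrightarrow> \<bar>f' x\<bar> \<le> Bd"
  shows "\<bar>f b - f a\<bar> \<le> Bd * \<bar>b - a\<bar>"
  using mvt_ab[of a b f f' Bd] d B by (simp add: has_real_derivative_iff_has_vector_derivative)



locale setting = ham H1 H2 D1 C1 C2 for H1 H2 D1 :: "complex^'n::finite^'n" and C1 C2 :: real +
  fixes T :: real and f1 f2 f1' f2' f1'' f2'' :: "real \<Rightarrow> real" and psi :: "real \<Rightarrow> complex^'n"
    and a0 a1 a2 b0 b1 b2 MH MS :: real
  assumes T: "T > 0"
    and d1: "\<And>t. t \<in> {0..T} \<Longrightarrow> (f1 has_real_derivative f1' t) (at t within {0..T})"
    and dd1: "\<And>t. t \<in> {0..T} \<Longrightarrow> (f1' has_real_derivative f1'' t) (at t within {0..T})"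
    and d2: "\<And>t. t \<in> {0..T} \<Longrightarrow> (f2 has_real_derivative f2' t) (at t within {0..T})"
    and dd2: "\<And>t. t \<in> {0..T} \<Longrightarrow> (f2' has_real_derivative f2'' t) (at t within {0..T})"
    and ba0: "\<And>t. t \<in> {0..T} \<Longrightarrow> \<bar>f1 t\<bar> \<le> a0"
    and ba1: "\<And>t. t \<in> {0..T} \<Longrightarrow> \<bar>f1' t\<bar> \<le> a1"
    and ba2: "\<And>t. t \<in> {0..T} \<Longrightarrow> \<bar>f1'' t\<bar> \<le> a2"
    and bb0: "\<And>t. t \<in> {0..T} \<Longrightarrow> \<bar>f2 t\<bar> \<le> b0"
    and bb1: "\<And>t. t \<in> {0..T} \<Longrightarrow> \<bar>f2' t\<bar> \<le> b1"
    and bb2: "\<And>t. t \<in> {0..T} \<Longrightarrow> \<bar>f2'' t\<bar> \<le> b2"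
    and dpsi: "\<And>t. t \<in> {0..T} \<Longrightarrow> (psi has_vector_derivative
        - J (f1 t *\<^sub>R (H1 *v psi t) + f2 t *\<^sub>R (H2 *v psi t))) (at t within {0..T})"
    and MH: "\<And>t. t \<in> {0..T} \<Longrightarrow> norm (H1 *v psi t) \<le> MH"
    and MS: "\<And>t. t \<in> {0..T} \<Longrightarrow> sqrt (norm (psi 0) * norm (H1 *v psi t)) \<le> MS"
begin

definition "F1 x = integral {0..x} f1"
definition "F2 x = integral {0..x} f2"
definition "r0 = norm (psi 0)"
definition "nH2 = opnorm H2"

lemma T0: "0 \<in> {0..T}" using T by simp

lemma a0: "a0 \<ge> 0" using ba0[OF T0] by linarith
lemma a1: "a1 \<ge> 0" using ba1[OF T0] by linarith
lemma a2: "a2 \<ge> 0" using ba2[OF T0] by linarith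
lemma b0: "b0 \<ge> 0" using bb0[OF T0] by linarith
lemma b1: "b1 \<ge> 0" using bb1[OF T0] by linarith
lemma b2: "b2 \<ge> 0" using bb2[OF T0] by linarith
lemma MH0: "MH \<ge> 0" using MH[OF T0] norm_ge_zero order_trans by blast
lemma r00: "r0 \<ge> 0" by (simp add: r0_def)
lemma nH20: "nH2 \<ge> 0" by (simp add: nH2_def opnorm_nonneg)
lemma H2b: "norm (H2 *v v) \<le> nH2 * norm v" by (simp add: nH2_def opnorm_bound)

lemma psi_norm: assumes t: "t \<in> {0..T}" shows "norm (psi t) = r0"
proof -
  have "norm (psi t) = norm (psi 0)"
  proof (rule norm_conserv[where B="\<lambda>t. f1 t *\<^sub>R H1 + f2 t *\<^sub>R H2" and b=T])
    fix x assume x: "x \<in> {0..T}"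
    show "(psi has_vector_derivative - (\<i> *s ((f1 x *\<^sub>R H1 + f2 x *\<^sub>R H2) *v psi x))) (at x within {0..T})"
      using dpsi[OF x] by (simp add: J_def matrix_vector_mult_add_rdistrib mv_scaleR_left)
    show "hermitian (f1 x *\<^sub>R H1 + f2 x *\<^sub>R H2)" by (rule herm_comb[OF h1 h2])
  qed (use t T in auto)
  then show ?thesis by (simp add: r0_def)
qed

lemma cont_f1: "continuous_on {0..T} f1" by (rule DERIV_continuous_on[OF d1])
lemma cont_f2: "continuous_on {0..T} f2" by (rule DERIV_continuous_on[OF d2])

lemma F1_deriv: "t \<in> {0..T} \<Longrightarrow> (F1 has_real_derivative f1 t) (at t within {0..T})"
  unfolding F1_def by (rule integral_has_real_derivative[OF cont_f1])
lemma F2_deriv: "t \<in> {0..T} \<Longrightarrow> (F2 has_real_derivative f2 t) (at t within {0..T})"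
  unfolding F2_def by (rule integral_has_real_derivative[OF cont_f2])

lemma int_F1: assumes "0 \<le> a" "a \<le> b" "b \<le> T" shows "integral {a..b} f1 = F1 b - F1 a"
proof -
  have "f1 integrable_on {0..b}"
    by (rule integrable_continuous_real, rule continuous_on_subset[OF cont_f1]) (use assms in auto)
  from Henstock_Kurzweil_Integration.integral_combine[OF assms(1,2) this] show ?thesis by (simp add: F1_def)
qed
lemma int_F2: assumes "0 \<le> a" "a \<le> b" "b \<le> T" shows "integral {a..b} f2 = F2 b - F2 a"
proof -
  have "f2 integrable_on {0..b}"
    by (rule integrable_continuous_real, rule continuous_on_subset[OF cont_f2]) (use assms in auto)
  from Henstock_Kurzweil_Integration.integral_combine[OF assms(1,2) this] show ?thesis by (simp add: F2_def)
qed

lemma sub_within: "x \<in> {0..T} \<Longrightarrow> (f has_real_derivative f') (at x within {0..T}) \<Longrightarrow> S \<subseteq> {0..T}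
  \<Longrightarrow> (f has_real_derivative f') (at x within S)"
  by (rule has_field_derivative_subset)

lemma lip_gen:
  assumes d: "\<And>t. t \<in> {0..T} \<Longrightarrow> (g has_real_derivative g' t) (at t within {0..T})"
    and B: "\<And>t. t \<in> {0..T} \<Longrightarrow> \<bar>g' t\<bar> \<le> Bd"
    and x: "x \<in> {0..T}" and y: "y \<in> {0..T}"
  shows "\<bar>g x - g y\<bar> \<le> Bd * \<bar>x - y\<bar>"
proof (rule mvt_real)
  fix s assume s: "s \<in> {min y x..max y x}"
  then have s': "s \<in> {0..T}" using x y by (auto simp: min_def max_def split: if_splits)
  show "(g has_real_derivative g' s) (at s within {min y x..max y x})"
    by (rule has_field_derivative_subset[OF d[OF s']]) (use x y in \<open>auto simp: min_def max_def\<close>)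
  show "\<bar>g' s\<bar> \<le> Bd" by (rule B[OF s'])
qed

lemma f1_lip: "x \<in> {0..T} \<Longrightarrow> y \<in> {0..T} \<Longrightarrow> \<bar>f1 x - f1 y\<bar> \<le> a1 * \<bar>x - y\<bar>"
  by (rule lip_gen[OF d1 ba1])
lemma f2_lip: "x \<in> {0..T} \<Longrightarrow> y \<in> {0..T} \<Longrightarrow> \<bar>f2 x - f2 y\<bar> \<le> b1 * \<bar>x - y\<bar>"
  by (rule lip_gen[OF d2 bb1])
lemma F1_lip: "x \<in> {0..T} \<Longrightarrow> y \<in> {0..T} \<Longrightarrow> \<bar>F1 x - F1 y\<bar> \<le> a0 * \<bar>x - y\<bar>"
  by (rule lip_gen[OF F1_deriv ba0])
lemma F2_lip: "x \<in> {0..T} \<Longrightarrow> y \<in> {0..T} \<Longrightarrow> \<bar>F2 x - F2 y\<bar> \<le> b0 * \<bar>x - y\<bar>"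
  by (rule lip_gen[OF F2_deriv bb0])


lemma FO:
  assumes t: "0 \<le> t" "0 \<le> h" "t + h \<le> T"
    and da: "\<And>s. s \<in> {t..t+h} \<Longrightarrow> (a has_real_derivative a' s) (at s within {t..t+h})"
    and db: "\<And>s. s \<in> {t..t+h} \<Longrightarrow> (b has_real_derivative b' s) (at s within {t..t+h})"
    and at0: "a t = 0" and bt0: "b t = 0"
    and Bd: "\<And>s. s \<in> {t..t+h} \<Longrightarrow> \<bar>a' s\<bar> * (C1 * (norm (D1 *v psi s) + r0 * (2 + C1 * \<bar>b s\<bar>)) * \<bar>b s\<bar>)
        + \<bar>a' s - f1 s\<bar> * norm (H1 *v psi s) + \<bar>b' s - f2 s\<bar> * (nH2 * r0) \<le> Bd"
  shows "norm (ev H2 (b (t+h)) (ev H1 (a (t+h)) (psi t)) - psi (t+h)) \<le> Bd * h"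
proof -
  define S where "S = {t..t+h}"
  define u where "u s = ev H2 (- b s) (psi s)" for s
  define X where "X s = ev H1 (- a s) (u s)" for s
  define Z where "Z s = a' s *\<^sub>R (H1 *v u s - ev H2 (- b s) (H1 *v psi s)) + (a' s - f1 s) *\<^sub>R ev H2 (- b s) (H1 *v psi s)
      + (b' s - f2 s) *\<^sub>R ev H2 (- b s) (H2 *v psi s)" for s
  have sT: "s \<in> {0..T}" if "s \<in> S" for s using that t by (auto simp: S_def)
  have dchi: "(X has_vector_derivative ev H1 (- a s) (J (Z s))) (at s within S)" if s: "s \<in> S" for s
  proof -
    have dp: "(psi has_vector_derivative - J (f1 s *\<^sub>R (H1 *v psi s) + f2 s *\<^sub>R (H2 *v psi s))) (at s within S)"
      by (rule has_vector_derivative_within_subset[OF dpsi[OF sT[OF s]]]) (use t in \<open>auto simp: S_def\<close>)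
    have du: "(u has_vector_derivative
        (ev H2 (- b s) (- J (f1 s *\<^sub>R (H1 *v psi s) + f2 s *\<^sub>R (H2 *v psi s))) - (- b' s) *\<^sub>R J (H2 *v u s))) (at s within S)"
      unfolding u_def by (rule ev_deriv_J[OF h2 DERIV_minus[OF db[OF s[unfolded S_def]]] dp[unfolded S_def], folded S_def])
    have dc: "(X has_vector_derivative
        (ev H1 (- a s) (ev H2 (- b s) (- J (f1 s *\<^sub>R (H1 *v psi s) + f2 s *\<^sub>R (H2 *v psi s))) - (- b' s) *\<^sub>R J (H2 *v u s))
         - (- a' s) *\<^sub>R J (H1 *v X s))) (at s within S)"
      unfolding X_def by (rule ev_deriv_J[OF h1 DERIV_minus[OF da[OF s[unfolded S_def]]] du[unfolded S_def], folded S_def])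
    have e1: "H1 *v X s = ev H1 (- a s) (H1 *v u s)" by (simp add: X_def ev_comm[OF h1])
    have e2: "H2 *v u s = ev H2 (- b s) (H2 *v psi s)" by (simp add: u_def ev_comm[OF h2])
    have "ev H1 (- a s) (ev H2 (- b s) (- J (f1 s *\<^sub>R (H1 *v psi s) + f2 s *\<^sub>R (H2 *v psi s))) - (- b' s) *\<^sub>R J (H2 *v u s))
         - (- a' s) *\<^sub>R J (H1 *v X s) = ev H1 (- a s) (J (Z s))"
      unfolding e1 e2 Z_def
      by (simp add: ev_J[OF h1] ev_J[OF h2] ev_scaleR[OF h1] ev_scaleR[OF h2] ev_add[OF h1] ev_add[OF h2]
          ev_diff[OF h1] ev_diff[OF h2] ev_uminus[OF h1] ev_uminus[OF h2] J_simps algebra_simps)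
    with dc show ?thesis by simp
  qed
  have nb: "norm (ev H1 (- a s) (J (Z s))) \<le> Bd" if s: "s \<in> S" for s
  proof -
    have sS: "s \<in> {t..t+h}" using s by (simp add: S_def)
    have c: "norm (H1 *v u s - ev H2 (- b s) (H1 *v psi s)) \<le> C1 * (norm (D1 *v psi s) + r0 * (2 + C1 * \<bar>b s\<bar>)) * \<bar>b s\<bar>"
    proof -
      have "norm (H1 *v u s - ev H2 (- b s) (H1 *v psi s)) = norm (ev H2 (b s) (H1 *v u s - ev H2 (- b s) (H1 *v psi s)))"
        by (rule ev_norm[OF h2, symmetric])
      also have "\<dots> = norm (ev H2 (- (- b s)) (H1 *v ev H2 (- b s) (psi s)) - H1 *v psi s)"
        by (simp add: u_def ev_diff[OF h2] ev_inv2[OF h2])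
      also have "\<dots> \<le> C1 * (norm (D1 *v psi s) + norm (psi s) * (2 + C1 * \<bar>- b s\<bar>)) * \<bar>- b s\<bar>"
        by (rule comm_E2)
      finally show ?thesis using psi_norm[OF sT[OF s]] by simp
    qed
    have "norm (ev H1 (- a s) (J (Z s))) = norm (Z s)" by (simp add: ev_norm[OF h1] norm_J)
    also have "\<dots> \<le> \<bar>a' s\<bar> * norm (H1 *v u s - ev H2 (- b s) (H1 *v psi s))
        + \<bar>a' s - f1 s\<bar> * norm (ev H2 (- b s) (H1 *v psi s)) + \<bar>b' s - f2 s\<bar> * norm (ev H2 (- b s) (H2 *v psi s))"
      unfolding Z_def by (intro order_trans[OF norm_triangle_ineq] add_mono order_refl) simp_all
    also have "\<dots> \<le> \<bar>a' s\<bar> * (C1 * (norm (D1 *v psi s) + r0 * (2 + C1 * \<bar>b s\<bar>)) * \<bar>b s\<bar>)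
        + \<bar>a' s - f1 s\<bar> * norm (H1 *v psi s) + \<bar>b' s - f2 s\<bar> * (nH2 * r0)"
      using c H2b[of "psi s"] psi_norm[OF sT[OF s]]
      by (intro add_mono mult_left_mono) (simp_all add: ev_norm[OF h2])
    also have "\<dots> \<le> Bd" by (rule Bd[OF sS])
    finally show ?thesis .
  qed
  have m: "norm (X (t+h) - X t) \<le> Bd * \<bar>(t+h) - t\<bar>"
  proof -
    have eqS: "{min t (t+h)..max t (t+h)} = S" using t by (auto simp: S_def)
    show ?thesis by (rule mvt_ab) (use dchi nb in \<open>simp_all only: eqS\<close>)
  qed
  have "norm (ev H2 (b (t+h)) (ev H1 (a (t+h)) (psi t)) - psi (t+h))
      = norm (ev H1 (- a (t+h)) (ev H2 (- b (t+h)) (ev H2 (b (t+h)) (ev H1 (a (t+h)) (psi t)) - psi (t+h))))"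
    by (simp add: ev_norm[OF h1] ev_norm[OF h2])
  also have "\<dots> = norm (X t - X (t+h))"
    by (simp add: X_def u_def at0 bt0 ev_diff[OF h1] ev_diff[OF h2] ev_inv1[OF h1] ev_inv1[OF h2])
  finally show ?thesis using m t by (simp add: norm_minus_commute)
qed


lemma N_psi: "s \<in> {0..T} \<Longrightarrow> norm (D1 *v psi s) \<le> MH + r0"
  using N_le[of "psi s"] MH[of s] psi_norm[of s] r00 MH0 by simp

lemma step_s1_ev: "step_s1 f1 f2 H1 H2 t h v = ev H2 (f2 (t+h) * h) (ev H1 (f1 (t+h) * h) v)"
  by (simp add: step_s1_def ev_def)

lemma step_g1_ev: "step_g1 f1 f2 H1 H2 t h v = ev H2 (integral {t..t+h} f2) (ev H1 (integral {t..t+h} f1) v)"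
  by (simp add: step_g1_def ev_def)

lemma comm_piece:
  assumes M0: "M \<ge> 0" and "\<bar>x\<bar> \<le> a0" "N \<le> M + r0" "\<bar>y\<bar> \<le> b0 * h" "0 \<le> h" "h \<le> T" "N \<ge> 0"
  shows "\<bar>x\<bar> * (C1 * (N + r0 * (2 + C1 * \<bar>y\<bar>)) * \<bar>y\<bar>) \<le> (a0 * C1 * (3 + C1 * b0 * T) * b0) * h * (M + r0)"
proof -
  have y: "\<bar>y\<bar> \<le> b0 * T" using assms b0 by (meson mult_left_mono order_trans)
  have "C1 * \<bar>y\<bar> \<le> C1 * b0 * T" using y C1 by (simp add: mult_left_mono mult.assoc)
  then have "r0 * (2 + C1 * \<bar>y\<bar>) \<le> r0 * (2 + C1 * b0 * T)" using r00 by (simp add: mult_left_mono)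
  also have "\<dots> \<le> (M + r0) * (2 + C1 * b0 * T)" using M0 r00 C1 b0 T
    by (intro mult_right_mono) auto
  finally have A: "N + r0 * (2 + C1 * \<bar>y\<bar>) \<le> (3 + C1 * b0 * T) * (M + r0)"
    using assms(3) by (simp add: algebra_simps)
  have W: "C1 * (N + r0 * (2 + C1 * \<bar>y\<bar>)) * \<bar>y\<bar> \<le> C1 * ((3 + C1 * b0 * T) * (M + r0)) * (b0 * h)"
    using A assms C1 r00 b0 T M0 by (intro mult_mono mult_left_mono) (auto intro!: mult_nonneg_nonneg add_nonneg_nonneg)
  have "\<bar>x\<bar> * (C1 * (N + r0 * (2 + C1 * \<bar>y\<bar>)) * \<bar>y\<bar>) \<le> a0 * (C1 * ((3 + C1 * b0 * T) * (M + r0)) * (b0 * h))"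
    by (rule mult_mono[OF assms(2) W]) (use assms C1 r00 in \<open>auto intro!: mult_nonneg_nonneg add_nonneg_nonneg\<close>)
  then show ?thesis by (simp add: ac_simps)
qed

definition "Ks1 = a0 * C1 * (3 + C1 * b0 * T) * b0 + a1 + b1 * nH2"

lemma LE_s1:
  assumes t: "0 \<le> t" "0 \<le> h" "t + h \<le> T"
  shows "norm (step_s1 f1 f2 H1 H2 t h (psi t) - psi (t+h)) \<le> Ks1 * h^2 * (MH + r0)"
proof -
  have "norm (ev H2 ((\<lambda>s. f2 (t+h) * (s - t)) (t+h)) (ev H1 ((\<lambda>s. f1 (t+h) * (s - t)) (t+h)) (psi t)) - psi (t+h))
        \<le> (Ks1 * h * (MH + r0)) * h"
  proof (rule FO[OF t, where a="\<lambda>s. f1 (t+h) * (s - t)" and b="\<lambda>s. f2 (t+h) * (s - t)"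
        and a'="\<lambda>s. f1 (t+h)" and b'="\<lambda>s. f2 (t+h)"])
    fix s assume s: "s \<in> {t..t+h}"
    then have sT: "s \<in> {0..T}" and thT: "t + h \<in> {0..T}" using t by auto
    show "((\<lambda>s. f1 (t+h) * (s - t)) has_real_derivative f1 (t+h)) (at s within {t..t+h})"
      by (auto intro!: derivative_eq_intros)
    show "((\<lambda>s. f2 (t+h) * (s - t)) has_real_derivative f2 (t+h)) (at s within {t..t+h})"
      by (auto intro!: derivative_eq_intros)
    have hs: "\<bar>s - t\<bar> \<le> h" "\<bar>(t+h) - s\<bar> \<le> h" using s by auto
    have p1: "\<bar>f1 (t+h)\<bar> * (C1 * (norm (D1 *v psi s) + r0 * (2 + C1 * \<bar>f2 (t+h) * (s - t)\<bar>)) * \<bar>f2 (t+h) * (s - t)\<bar>)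
        \<le> (a0 * C1 * (3 + C1 * b0 * T) * b0) * h * (MH + r0)"
    proof (rule comm_piece[OF MH0])
      show "\<bar>f2 (t + h) * (s - t)\<bar> \<le> b0 * h"
        unfolding abs_mult using bb0[OF thT] hs by (intro mult_mono) auto
    qed (use ba0[OF thT] N_psi[OF sT] t in auto)
    have e1: "\<bar>f1 (t+h) - f1 s\<bar> \<le> a1 * h"
      using f1_lip[OF thT sT] mult_left_mono[OF hs(2) a1] by linarith
    have e2: "\<bar>f2 (t+h) - f2 s\<bar> \<le> b1 * h"
      using f2_lip[OF thT sT] mult_left_mono[OF hs(2) b1] by linarith
    have p2: "\<bar>f1 (t+h) - f1 s\<bar> * norm (H1 *v psi s) \<le> (a1 * h) * MH"
      using e1 MH[OF sT] a1 t by (intro mult_mono) auto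
    have p3: "\<bar>f2 (t+h) - f2 s\<bar> * (nH2 * r0) \<le> (b1 * h) * (nH2 * r0)"
      using e2 b1 nH20 r00 by (intro mult_mono) auto
    have "(a1 * h) * MH + (b1 * h) * (nH2 * r0) \<le> (a1 + b1 * nH2) * h * (MH + r0)"
      using a1 b1 nH20 r00 MH0 t by (simp add: algebra_simps add_mono mult_nonneg_nonneg)
    then show "\<bar>f1 (t+h)\<bar> * (C1 * (norm (D1 *v psi s) + r0 * (2 + C1 * \<bar>f2 (t+h) * (s - t)\<bar>)) * \<bar>f2 (t+h) * (s - t)\<bar>)
        + \<bar>f1 (t+h) - f1 s\<bar> * norm (H1 *v psi s) + \<bar>f2 (t+h) - f2 s\<bar> * (nH2 * r0) \<le> Ks1 * h * (MH + r0)"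
      using p1 p2 p3 by (simp add: Ks1_def algebra_simps)
  qed auto
  then show ?thesis by (simp add: step_s1_ev power2_eq_square ac_simps)
qed


lemma MS0: "MS \<ge> 0" using MS[OF T0] real_sqrt_ge_zero order_trans by (metis mult_nonneg_nonneg norm_ge_zero)

definition "Kg1 = a0 * C1 * (3 + C1 * b0 * T) * b0"

lemma LE_g1:
  assumes t: "0 \<le> t" "0 \<le> h" "t + h \<le> T"
  shows "norm (step_g1 f1 f2 H1 H2 t h (psi t) - psi (t+h)) \<le> Kg1 * h^2 * (MS + r0)"
proof -
  have sub: "{t..t+h} \<subseteq> {0..T}" using t by auto
  have "norm (ev H2 ((\<lambda>s. F2 s - F2 t) (t+h)) (ev H1 ((\<lambda>s. F1 s - F1 t) (t+h)) (psi t)) - psi (t+h))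
        \<le> (Kg1 * h * (MS + r0)) * h"
  proof (rule FO[OF t, where a="\<lambda>s. F1 s - F1 t" and b="\<lambda>s. F2 s - F2 t" and a'=f1 and b'=f2])
    fix s assume s: "s \<in> {t..t+h}"
    then have sT: "s \<in> {0..T}" and tT: "t \<in> {0..T}" using t by auto
    show "((\<lambda>s. F1 s - F1 t) has_real_derivative f1 s) (at s within {t..t+h})"
      using has_field_derivative_subset[OF F1_deriv[OF sT] sub] by (auto intro!: derivative_eq_intros)
    show "((\<lambda>s. F2 s - F2 t) has_real_derivative f2 s) (at s within {t..t+h})"
      using has_field_derivative_subset[OF F2_deriv[OF sT] sub] by (auto intro!: derivative_eq_intros)
    have hs: "\<bar>s - t\<bar> \<le> h" using s by auto
    have Nb: "norm (D1 *v psi s) \<le> MS + r0"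
      using N_le_sqrt[of "psi s"] MS[OF sT] psi_norm[OF sT] norm_ge_zero[of "psi 0"] unfolding r0_def
      by (smt (verit))
    have p1: "\<bar>f1 s\<bar> * (C1 * (norm (D1 *v psi s) + r0 * (2 + C1 * \<bar>F2 s - F2 t\<bar>)) * \<bar>F2 s - F2 t\<bar>)
        \<le> (a0 * C1 * (3 + C1 * b0 * T) * b0) * h * (MS + r0)"
    proof (rule comm_piece[OF MS0])
      show "\<bar>F2 s - F2 t\<bar> \<le> b0 * h"
        using F2_lip[OF sT tT] mult_left_mono[OF hs b0] by linarith
    qed (use ba0[OF sT] Nb t in auto)
    then show "\<bar>f1 s\<bar> * (C1 * (norm (D1 *v psi s) + r0 * (2 + C1 * \<bar>F2 s - F2 t\<bar>)) * \<bar>F2 s - F2 t\<bar>)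
        + \<bar>f1 s - f1 s\<bar> * norm (H1 *v psi s) + \<bar>f2 s - f2 s\<bar> * (nH2 * r0) \<le> Kg1 * h * (MS + r0)"
      by (simp add: Kg1_def)
  qed auto
  moreover have "integral {t..t+h} f1 = F1 (t+h) - F1 t" "integral {t..t+h} f2 = F2 (t+h) - F2 t"
    using t by (auto intro: int_F1 int_F2)
  ultimately show ?thesis by (simp add: step_g1_ev power2_eq_square ac_simps)
qed

end



context setting
begin

definition "zeta m s = ev H1 (F1 m - F1 s) (psi s)"
definition "zeta' m s = - (f2 s *\<^sub>R J (ev H1 (F1 m - F1 s) (H2 *v psi s)))"
definition "eta t m s = ev H2 (- (F2 s - F2 t)) (zeta m s)"
definition "kk t m s = f2 s *\<^sub>R J (ev H2 (- (F2 s - F2 t)) (H2 *v zeta m s - ev H1 (F1 m - F1 s) (H2 *v psi s)))"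
definition "phi t m s = f2 s *\<^sub>R ev H2 (- (F2 s - F2 t)) (comm H1 H2 *v zeta m s)"
definition "phi' t m s = f2' s *\<^sub>R ev H2 (- (F2 s - F2 t)) (comm H1 H2 *v zeta m s)
   + f2 s *\<^sub>R (ev H2 (- (F2 s - F2 t)) (comm H1 H2 *v zeta' m s) + f2 s *\<^sub>R J (H2 *v ev H2 (- (F2 s - F2 t)) (comm H1 H2 *v zeta m s)))"

lemma dzeta: assumes s: "s \<in> {0..T}"
  shows "(zeta m has_vector_derivative zeta' m s) (at s within {0..T})"
proof -
  have dth: "((\<lambda>s. F1 m - F1 s) has_real_derivative - f1 s) (at s within {0..T})"
    using F1_deriv[OF s] by (auto intro!: derivative_eq_intros)
  have "(zeta m has_vector_derivative
      ev H1 (F1 m - F1 s) (- J (f1 s *\<^sub>R (H1 *v psi s) + f2 s *\<^sub>R (H2 *v psi s))) - (- f1 s) *\<^sub>R J (H1 *v ev H1 (F1 m - F1 s) (psi s)))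
      (at s within {0..T})"
    unfolding zeta_def by (rule ev_deriv_J[OF h1 dth dpsi[OF s]])
  moreover have "ev H1 (F1 m - F1 s) (- J (f1 s *\<^sub>R (H1 *v psi s) + f2 s *\<^sub>R (H2 *v psi s))) - (- f1 s) *\<^sub>R J (H1 *v ev H1 (F1 m - F1 s) (psi s))
      = zeta' m s"
    by (simp add: zeta'_def ev_J[OF h1] ev_uminus[OF h1] ev_add[OF h1] ev_diff[OF h1] ev_scaleR[OF h1] ev_comm[OF h1] J_simps algebra_simps)
  ultimately show ?thesis by simp
qed

lemma deta: assumes s: "s \<in> {0..T}"
  shows "(eta t m has_vector_derivative kk t m s) (at s within {0..T})"
proof -
  have dbe: "((\<lambda>s. - (F2 s - F2 t)) has_real_derivative - f2 s) (at s within {0..T})"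
    using F2_deriv[OF s] by (auto intro!: derivative_eq_intros)
  have "(eta t m has_vector_derivative
      ev H2 (- (F2 s - F2 t)) (zeta' m s) - (- f2 s) *\<^sub>R J (H2 *v ev H2 (- (F2 s - F2 t)) (zeta m s))) (at s within {0..T})"
    unfolding eta_def by (rule ev_deriv_J[OF h2 dbe dzeta[OF s]])
  moreover have "ev H2 (- (F2 s - F2 t)) (zeta' m s) - (- f2 s) *\<^sub>R J (H2 *v ev H2 (- (F2 s - F2 t)) (zeta m s)) = kk t m s"
    by (simp add: zeta'_def kk_def ev_J[OF h2] ev_uminus[OF h2] ev_diff[OF h2] ev_scaleR[OF h2] ev_comm[OF h2] J_simps algebra_simps)
  ultimately show ?thesis by simp
qed

lemma dphi: assumes s: "s \<in> {0..T}"
  shows "(phi t m has_vector_derivative phi' t m s) (at s within {0..T})"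
proof -
  have dbe: "((\<lambda>s. - (F2 s - F2 t)) has_real_derivative - f2 s) (at s within {0..T})"
    using F2_deriv[OF s] by (auto intro!: derivative_eq_intros)
  have dCz: "((\<lambda>s. comm H1 H2 *v zeta m s) has_vector_derivative comm H1 H2 *v zeta' m s) (at s within {0..T})"
    by (rule bounded_linear.has_vector_derivative[OF matrix_vector_mul_bounded_linear dzeta[OF s]])
  have de: "((\<lambda>s. ev H2 (- (F2 s - F2 t)) (comm H1 H2 *v zeta m s)) has_vector_derivative
      ev H2 (- (F2 s - F2 t)) (comm H1 H2 *v zeta' m s) - (- f2 s) *\<^sub>R J (H2 *v ev H2 (- (F2 s - F2 t)) (comm H1 H2 *v zeta m s))) (at s within {0..T})"
    by (rule ev_deriv_J[OF h2 dbe dCz])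
  have "(phi t m has_vector_derivative
      f2 s *\<^sub>R (ev H2 (- (F2 s - F2 t)) (comm H1 H2 *v zeta' m s) - (- f2 s) *\<^sub>R J (H2 *v ev H2 (- (F2 s - F2 t)) (comm H1 H2 *v zeta m s)))
      + f2' s *\<^sub>R ev H2 (- (F2 s - F2 t)) (comm H1 H2 *v zeta m s)) (at s within {0..T})"
    unfolding phi_def by (rule has_vector_derivative_scaleR[OF d2[OF s] de])
  then show ?thesis by (simp add: phi'_def algebra_simps)
qed


lemma Cb: "norm (comm H1 H2 *v v) \<le> 2 * C1 * (norm (H1 *v v) + norm v)"
proof -
  have "norm (comm H1 H2 *v v) \<le> C1 * (norm (D1 *v v) + norm v)" by (rule cb1)
  also have "\<dots> \<le> C1 * (2 * (norm (H1 *v v) + norm v))"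
  proof -
    have "norm (D1 *v v) + norm v \<le> 2 * (norm (H1 *v v) + norm v)"
    proof -
      have "2 * norm (D1 *v v) \<le> norm v + norm (H1 *v v)" using N_le[of v] by (simp add: field_simps)
      then show ?thesis using norm_ge_zero[of v] norm_ge_zero[of "H1 *v v"] by (smt (verit))
    qed
    then show ?thesis using C1 by (rule mult_left_mono)
  qed
  finally show ?thesis by (simp add: algebra_simps)
qed

lemma zeta_norm: "s \<in> {0..T} \<Longrightarrow> norm (zeta m s) = r0"
  by (simp add: zeta_def ev_norm[OF h1] psi_norm)

lemma H1_zeta: "s \<in> {0..T} \<Longrightarrow> norm (H1 *v zeta m s) \<le> MH"
  by (simp add: zeta_def H1_E1 MH)

lemma B_Cz: assumes s: "s \<in> {0..T}" shows "norm (comm H1 H2 *v zeta m s) \<le> 2 * C1 * (MH + r0)"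
proof -
  have "norm (H1 *v zeta m s) + norm (zeta m s) \<le> MH + r0" using H1_zeta[OF s] zeta_norm[OF s] by simp
  then have "2 * C1 * (norm (H1 *v zeta m s) + norm (zeta m s)) \<le> 2 * C1 * (MH + r0)"
    using C1 by (intro mult_left_mono) auto
  then show ?thesis using Cb[of "zeta m s"] by linarith
qed

lemma B_Cz': assumes s: "s \<in> {0..T}"
  shows "norm (comm H1 H2 *v zeta' m s) \<le> b0 * (2 * C1 * (nH2 + 2 * C1) * (MH + r0))"
proof -
  define w where "w = ev H1 (F1 m - F1 s) (H2 *v psi s)"
  have nw: "norm w \<le> nH2 * r0" using H2b[of "psi s"] by (simp add: w_def ev_norm[OF h1] psi_norm[OF s])
  have "norm (H1 *v w) = norm (H1 *v (H2 *v psi s))" by (simp add: w_def H1_E1)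
  also have "H1 *v (H2 *v psi s) = H2 *v (H1 *v psi s) + comm H1 H2 *v psi s" by (simp add: comm_apply)
  finally have "norm (H1 *v w) \<le> norm (H2 *v (H1 *v psi s)) + norm (comm H1 H2 *v psi s)"
    by (simp add: norm_triangle_ineq)
  also have "\<dots> \<le> nH2 * MH + 2 * C1 * (MH + r0)"
  proof (rule add_mono)
    show "norm (H2 *v (H1 *v psi s)) \<le> nH2 * MH"
      using H2b[of "H1 *v psi s"] mult_left_mono[OF MH[OF s] nH20] by linarith
    have "norm (H1 *v psi s) + norm (psi s) \<le> MH + r0" using MH[OF s] psi_norm[OF s] by simp
    then have "2 * C1 * (norm (H1 *v psi s) + norm (psi s)) \<le> 2 * C1 * (MH + r0)"
      using C1 by (intro mult_left_mono) auto
    then show "norm (comm H1 H2 *v psi s) \<le> 2 * C1 * (MH + r0)" using Cb[of "psi s"] by linarith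
  qed
  finally have nHw: "norm (H1 *v w) \<le> nH2 * MH + 2 * C1 * (MH + r0)" .
  have "norm (comm H1 H2 *v w) \<le> 2 * C1 * (norm (H1 *v w) + norm w)" by (rule Cb)
  also have "\<dots> \<le> 2 * C1 * ((nH2 + 2 * C1) * (MH + r0))"
    using nHw nw C1 nH20 MH0 r00 by (intro mult_left_mono) (auto simp: algebra_simps)
  finally have cw: "norm (comm H1 H2 *v w) \<le> 2 * C1 * (nH2 + 2 * C1) * (MH + r0)" by (simp add: ac_simps)
  have "norm (comm H1 H2 *v zeta' m s) = \<bar>f2 s\<bar> * norm (comm H1 H2 *v w)"
    by (simp add: zeta'_def w_def mv_uminus mv_scaleR mv_J norm_J)
  also have "\<dots> \<le> b0 * (2 * C1 * (nH2 + 2 * C1) * (MH + r0))"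
    using bb0[OF s] cw by (intro mult_mono) auto
  finally show ?thesis .
qed

lemma B_phi: assumes s: "s \<in> {0..T}" shows "norm (phi t m s) \<le> b0 * (2 * C1 * (MH + r0))"
proof -
  have "norm (phi t m s) = \<bar>f2 s\<bar> * norm (comm H1 H2 *v zeta m s)"
    by (simp add: phi_def ev_norm[OF h2])
  also have "\<dots> \<le> b0 * (2 * C1 * (MH + r0))"
    using bb0[OF s] B_Cz[OF s] by (intro mult_mono) auto
  finally show ?thesis .
qed

definition "Lphi = b1 * (2 * C1) + b0 * (b0 * (2 * C1 * (nH2 + 2 * C1)) + b0 * nH2 * (2 * C1))"

lemma B_dphi: assumes s: "s \<in> {0..T}" shows "norm (phi' t m s) \<le> Lphi * (MH + r0)"
proof -
  define X where "X = norm (comm H1 H2 *v zeta m s)"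
  define Y where "Y = norm (comm H1 H2 *v zeta' m s)"
  have X: "X \<le> 2 * C1 * (MH + r0)" "X \<ge> 0" using B_Cz[OF s] by (auto simp: X_def)
  have Y: "Y \<le> b0 * (2 * C1 * (nH2 + 2 * C1) * (MH + r0))" "Y \<ge> 0" using B_Cz'[OF s] by (auto simp: Y_def)
  have n3: "norm (J (H2 *v ev H2 (- (F2 s - F2 t)) (comm H1 H2 *v zeta m s))) \<le> nH2 * X"
    using H2b[of "ev H2 (- (F2 s - F2 t)) (comm H1 H2 *v zeta m s)"] by (simp add: norm_J X_def ev_norm[OF h2])
  have "norm (phi' t m s) \<le> \<bar>f2' s\<bar> * X + \<bar>f2 s\<bar> * (Y + \<bar>f2 s\<bar> * norm (J (H2 *v ev H2 (- (F2 s - F2 t)) (comm H1 H2 *v zeta m s))))"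
    unfolding phi'_def
    by (rule order_trans[OF norm_triangle_ineq add_mono])
       (auto simp: X_def Y_def ev_norm[OF h2] intro!: mult_left_mono order_trans[OF norm_triangle_ineq])
  also have "\<dots> \<le> b1 * (2 * C1 * (MH + r0)) + b0 * (b0 * (2 * C1 * (nH2 + 2 * C1) * (MH + r0)) + b0 * (nH2 * (2 * C1 * (MH + r0))))"
    using bb1[OF s] bb0[OF s] X Y n3 nH20
    by (intro add_mono mult_mono order_trans[OF n3] mult_left_mono) (auto intro!: mult_nonneg_nonneg add_nonneg_nonneg)
  also have "\<dots> = Lphi * (MH + r0)" by (simp add: Lphi_def algebra_simps)
  finally show ?thesis .
qed


lemma sub_interval: "x \<in> {0..T} \<Longrightarrow> y \<in> {0..T} \<Longrightarrow> {min x y..max x y} \<subseteq> {0..T}"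
  by (auto simp: min_def max_def)

lemma phi_lip: assumes x: "x \<in> {0..T}" and y: "y \<in> {0..T}"
  shows "norm (phi t m y - phi t m x) \<le> Lphi * (MH + r0) * \<bar>y - x\<bar>"
proof (rule mvt_ab)
  fix s assume s: "s \<in> {min x y..max x y}"
  then have sT: "s \<in> {0..T}" using sub_interval[OF x y] by auto
  show "(phi t m has_vector_derivative phi' t m s) (at s within {min x y..max x y})"
    by (rule has_vector_derivative_within_subset[OF dphi[OF sT] sub_interval[OF x y]])
  show "norm (phi' t m s) \<le> Lphi * (MH + r0)" by (rule B_dphi[OF sT])
qed

lemma vartheta_bound: assumes s: "s \<in> {0..T}" and m: "m \<in> {0..T}"
  shows "\<bar>(F1 m - F1 s) - (m - s) * f1 m\<bar> \<le> a1 * (s - m)^2"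
proof -
  have "\<bar>(\<lambda>s. (F1 m - F1 s) - (m - s) * f1 m) s - (\<lambda>s. (F1 m - F1 s) - (m - s) * f1 m) m\<bar> \<le> (a1 * \<bar>s - m\<bar>) * \<bar>s - m\<bar>"
  proof (rule mvt_real)
    fix x assume x: "x \<in> {min m s..max m s}"
    then have xT: "x \<in> {0..T}" using sub_interval[OF m s] by auto
    show "((\<lambda>s. (F1 m - F1 s) - (m - s) * f1 m) has_real_derivative (f1 m - f1 x)) (at x within {min m s..max m s})"
      using has_field_derivative_subset[OF F1_deriv[OF xT] sub_interval[OF m s]]
      by (auto intro!: derivative_eq_intros)
    have "\<bar>f1 m - f1 x\<bar> \<le> a1 * \<bar>m - x\<bar>" by (rule f1_lip[OF m xT])
    also have "\<dots> \<le> a1 * \<bar>s - m\<bar>" using x a1 by (intro mult_left_mono) (auto simp: min_def max_def split: if_splits)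
    finally show "\<bar>f1 m - f1 x\<bar> \<le> a1 * \<bar>s - m\<bar>" .
  qed
  then show ?thesis by (simp add: power2_eq_square abs_mult_self mult.assoc)
qed

lemma k_decomp: assumes s: "s \<in> {0..T}" and m: "m \<in> {0..T}"
  shows "norm (kk t m s - ((s - m) * f1 m) *\<^sub>R phi t m s) \<le> (a1 * b0 * (2 * C1) + b0 * C2 * a0^2) * (MH + r0) * (s - m)^2"
proof -
  define th where "th = F1 m - F1 s"
  define z where "z = zeta m s"
  define E where "E v = ev H2 (- (F2 s - F2 t)) v" for v
  define R where "R = ev H1 th (H2 *v ev H1 (- th) z) - H2 *v z + th *\<^sub>R J (comm H1 H2 *v z)"
  define vt where "vt = th - (m - s) * f1 m"
  have zi: "ev H1 (- th) z = psi s" by (simp add: z_def zeta_def th_def ev_group[OF h1])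
  have eR: "ev H1 th (H2 *v psi s) = R + H2 *v z - th *\<^sub>R J (comm H1 H2 *v z)"
    by (simp add: R_def zi)
  have kk_eq: "kk t m s = f2 s *\<^sub>R J (E (th *\<^sub>R J (comm H1 H2 *v z) - R))"
    unfolding kk_def E_def th_def[symmetric] z_def[symmetric] eR by (simp add: algebra_simps)
  have eq: "kk t m s - ((s - m) * f1 m) *\<^sub>R phi t m s = - (vt *\<^sub>R phi t m s) - f2 s *\<^sub>R J (E R)"
    unfolding kk_eq phi_def E_def z_def[symmetric] vt_def
    by (simp add: ev_diff[OF h2] ev_scaleR[OF h2] ev_J[OF h2] J_simps algebra_simps)
  have nR: "norm R \<le> C2 * (MH + r0) * (a0^2 * (s - m)^2)"
  proof -
    have "norm R \<le> C2 * (norm (H1 *v z) + norm z) * th^2" unfolding R_def J_def by (rule K2)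
    also have "\<dots> \<le> C2 * (MH + r0) * (a0^2 * (s - m)^2)"
    proof (rule mult_mono)
      show "C2 * (norm (H1 *v z) + norm z) \<le> C2 * (MH + r0)"
        using H1_zeta[OF s] zeta_norm[OF s] C2 by (intro mult_left_mono) (auto simp: z_def)
      have "\<bar>th\<bar> \<le> a0 * \<bar>m - s\<bar>" unfolding th_def by (rule F1_lip[OF m s])
      then have "th^2 \<le> (a0 * \<bar>m - s\<bar>)^2" using abs_le_square_iff[of th "a0 * \<bar>m - s\<bar>"] a0 by (simp add: abs_mult)
      then show "th^2 \<le> a0^2 * (s - m)^2" by (simp add: power_mult_distrib power2_abs power2_commute)
    qed (use C2 MH0 r00 in auto)
    finally show ?thesis .
  qed
  have "norm (kk t m s - ((s - m) * f1 m) *\<^sub>R phi t m s) \<le> \<bar>vt\<bar> * norm (phi t m s) + \<bar>f2 s\<bar> * norm R"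
    unfolding eq by (rule order_trans[OF norm_triangle_ineq4]) (simp add: norm_J E_def ev_norm[OF h2])
  also have "\<dots> \<le> (a1 * (s - m)^2) * (b0 * (2 * C1 * (MH + r0))) + b0 * (C2 * (MH + r0) * (a0^2 * (s - m)^2))"
  proof (rule add_mono; rule mult_mono)
    show "\<bar>vt\<bar> \<le> a1 * (s - m)^2" unfolding vt_def th_def by (rule vartheta_bound[OF s m])
  qed (use B_phi[OF s] bb0[OF s] nR a1 b0 in auto)
  also have "\<dots> = (a1 * b0 * (2 * C1) + b0 * C2 * a0^2) * (MH + r0) * (s - m)^2"
    by (simp add: algebra_simps)
  finally show ?thesis .
qed


lemma step_g2_ev: "step_g2 f1 f2 H1 H2 t h v = ev H1 (integral {t+h/2..t+h} f1) (ev H2 (integral {t..t+h} f2) (ev H1 (integral {t..t+h/2} f1) v))"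
  by (simp add: step_g2_def ev_def)

definition "Kg2 = a0 * Lphi + (a1 * b0 * (2 * C1) + b0 * C2 * a0^2)"

lemma Kg20: "Kg2 \<ge> 0"
  unfolding Kg2_def Lphi_def using a0 a1 b0 b1 C1 C2 nH20
  by (intro add_nonneg_nonneg mult_nonneg_nonneg) auto

lemma LE_g2:
  assumes t: "0 \<le> t" "0 \<le> h" "t + h \<le> T"
  shows "norm (step_g2 f1 f2 H1 H2 t h (psi t) - psi (t+h)) \<le> Kg2 * h^3 * (MH + r0)"
proof -
  define m where "m = t + h/2"
  have mT: "m \<in> {0..T}" using t by (auto simp: m_def)
  have sub: "{t..t+h} \<subseteq> {0..T}" using t by auto
  define Psi where "Psi s = eta t m s - ((s - m)^2 / 2 * f1 m) *\<^sub>R phi t m m" for s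
  have dPsi: "(Psi has_vector_derivative kk t m s - ((s - m) * f1 m) *\<^sub>R phi t m m) (at s within {t..t+h})"
    if s: "s \<in> {t..t+h}" for s
  proof -
    have sT: "s \<in> {0..T}" using s sub by auto
    have dq: "((\<lambda>s. ((s - m)^2 / 2 * f1 m) *\<^sub>R phi t m m) has_vector_derivative ((s - m) * f1 m) *\<^sub>R phi t m m) (at s within {t..t+h})"
    proof -
      have dr: "((\<lambda>s. (s - m)^2 / 2 * f1 m) has_real_derivative ((s - m) * f1 m)) (at s within {t..t+h})"
        by (rule DERIV_cong[OF _ refl], auto intro!: derivative_eq_intros)
      show ?thesis using has_vector_derivative_scaleR[OF dr has_vector_derivative_const[of "phi t m m"]] by simp
    qed
    show ?thesis unfolding Psi_def
      by (rule has_vector_derivative_diff[OF has_vector_derivative_within_subset[OF deta[OF sT] sub] dq])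
  qed
  have bPsi: "norm (kk t m s - ((s - m) * f1 m) *\<^sub>R phi t m m) \<le> Kg2 * h^2 * (MH + r0)"
    if s: "s \<in> {t..t+h}" for s
  proof -
    have sT: "s \<in> {0..T}" using s sub by auto
    have sm: "\<bar>s - m\<bar> \<le> h" using s by (auto simp: m_def)
    have sm2: "(s - m)^2 \<le> h^2" using sm abs_le_square_iff[of "s - m" h] t by simp
    have "norm (kk t m s - ((s - m) * f1 m) *\<^sub>R phi t m m)
        \<le> norm (kk t m s - ((s - m) * f1 m) *\<^sub>R phi t m s) + norm (((s - m) * f1 m) *\<^sub>R (phi t m s - phi t m m))"
      by (rule order_trans[OF _ norm_triangle_ineq]) (simp add: algebra_simps)
    also have "\<dots> \<le> (a1 * b0 * (2 * C1) + b0 * C2 * a0^2) * (MH + r0) * (s - m)^2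
        + (\<bar>s - m\<bar> * a0) * (Lphi * (MH + r0) * \<bar>s - m\<bar>)"
    proof (rule add_mono[OF k_decomp[OF sT mT]])
      show "norm (((s - m) * f1 m) *\<^sub>R (phi t m s - phi t m m)) \<le> (\<bar>s - m\<bar> * a0) * (Lphi * (MH + r0) * \<bar>s - m\<bar>)"
        unfolding norm_scaleR abs_mult
        using ba0[OF mT] phi_lip[OF mT sT, of t m]
        by (intro mult_mono mult_left_mono) auto
    qed
    also have "\<dots> = Kg2 * (MH + r0) * (s - m)^2"
    proof -
      have ab: "\<bar>s - m\<bar> * \<bar>s - m\<bar> = (s - m)^2" by (simp add: power2_eq_square)
      have "(\<bar>s - m\<bar> * a0) * (Lphi * (MH + r0) * \<bar>s - m\<bar>) = a0 * Lphi * (MH + r0) * (\<bar>s - m\<bar> * \<bar>s - m\<bar>)"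
        by (simp only: mult_ac)
      then show ?thesis unfolding ab by (simp add: Kg2_def algebra_simps)
    qed
    also have "\<dots> \<le> Kg2 * (MH + r0) * h^2"
      using sm2 Kg20 MH0 r00 by (intro mult_left_mono) auto
    finally show ?thesis by (simp add: ac_simps)
  qed
  have eqI: "{min t (t+h)..max t (t+h)} = {t..t+h}" using t by auto
  have mv: "norm (Psi (t+h) - Psi t) \<le> (Kg2 * h^2 * (MH + r0)) * \<bar>(t+h) - t\<bar>"
    by (rule mvt_ab) (use dPsi bPsi in \<open>simp_all only: eqI\<close>)
  have PsiE: "Psi (t+h) - Psi t = eta t m (t+h) - eta t m t"
    by (simp add: Psi_def m_def power2_eq_square algebra_simps)
  have i1: "integral {t..t+h/2} f1 = F1 m - F1 t" using t by (auto simp: m_def intro!: int_F1)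
  have i2: "integral {t+h/2..t+h} f1 = F1 (t+h) - F1 m" using t by (auto simp: m_def intro!: int_F1)
  have i3: "integral {t..t+h} f2 = F2 (t+h) - F2 t" using t by (auto intro!: int_F2)
  have "norm (step_g2 f1 f2 H1 H2 t h (psi t) - psi (t+h))
      = norm (ev H2 (- (F2 (t+h) - F2 t)) (ev H1 (F1 m - F1 (t+h)) (step_g2 f1 f2 H1 H2 t h (psi t) - psi (t+h))))"
    by (simp add: ev_norm[OF h1] ev_norm[OF h2])
  also have "\<dots> = norm (eta t m t - eta t m (t+h))"
    unfolding step_g2_ev i1 i2 i3
    by (simp add: eta_def zeta_def ev_diff[OF h1] ev_diff[OF h2] ev_group[OF h1] ev_group[OF h2])
  also have "\<dots> = norm (Psi (t+h) - Psi t)" by (simp add: PsiE norm_minus_commute)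
  also have "\<dots> \<le> Kg2 * h^3 * (MH + r0)" using mv t by (simp add: power3_eq_cube power2_eq_square ac_simps)
  finally show ?thesis .
qed

end



context ham
begin

definition "Qc y b = C1 * ((norm y + norm (H1 *v y)) / 2 + norm y * (2 + C1 * \<bar>b\<bar>)) * \<bar>b\<bar>"

lemma comm_E2': "norm (H1 *v ev H2 b x - ev H2 b (H1 *v x)) \<le> Qc x b"
proof -
  have "norm (H1 *v ev H2 b x - ev H2 b (H1 *v x)) = norm (ev H2 (- b) (H1 *v ev H2 b x - ev H2 b (H1 *v x)))"
    by (simp add: ev_norm[OF h2])
  also have "\<dots> = norm (ev H2 (- b) (H1 *v ev H2 b x) - H1 *v x)"
    by (simp add: ev_diff[OF h2] ev_inv1[OF h2])
  also have "\<dots> \<le> C1 * (norm (D1 *v x) + norm x * (2 + C1 * \<bar>b\<bar>)) * \<bar>b\<bar>" by (rule comm_E2)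
  also have "\<dots> \<le> Qc x b" unfolding Qc_def
    using N_le[of x] C1 by (intro mult_right_mono mult_left_mono add_right_mono) auto
  finally show ?thesis .
qed

lemma D_comm: "norm (ev H1 (- d) (ev H2 b (ev H1 d y)) - ev H2 b y) \<le> Qc y b * \<bar>d\<bar>"
proof -
  define D where "D s = ev H1 (- s) (ev H2 b (ev H1 s y))" for s
  have dD: "(D has_vector_derivative J (ev H1 (- s) (H1 *v ev H2 b (ev H1 s y) - ev H2 b (H1 *v ev H1 s y)))) (at s within S)" for s S
  proof -
    have d1': "((\<lambda>s. ev H1 s y) has_vector_derivative - J (H1 *v ev H1 s y)) (at s within S)"
      using ev_deriv[of H1 y s S] by (simp add: J_def)
    have d2': "((\<lambda>s. ev H2 b (ev H1 s y)) has_vector_derivative ev H2 b (- J (H1 *v ev H1 s y))) (at s within S)"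
      by (rule bounded_linear.has_vector_derivative[OF ev_bl[OF h2] d1'])
    have "(D has_vector_derivative ev H1 (- s) (ev H2 b (- J (H1 *v ev H1 s y))) - (- 1) *\<^sub>R J (H1 *v ev H1 (- s) (ev H2 b (ev H1 s y)))) (at s within S)"
      unfolding D_def by (rule ev_deriv_J[OF h1 _ d2']) (auto intro!: derivative_eq_intros)
    then show ?thesis
      by (simp add: ev_J[OF h1] ev_J[OF h2] ev_uminus[OF h2] ev_uminus[OF h1] ev_diff[OF h1] ev_comm[OF h1] J_simps algebra_simps)
  qed
  have "norm (D d - D 0) \<le> Qc y b * \<bar>d - 0\<bar>"
  proof (rule mvt_ab[OF dD])
    fix s
    have "norm (J (ev H1 (- s) (H1 *v ev H2 b (ev H1 s y) - ev H2 b (H1 *v ev H1 s y))))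
        = norm (H1 *v ev H2 b (ev H1 s y) - ev H2 b (H1 *v ev H1 s y))" by (simp add: norm_J ev_norm[OF h1])
    also have "\<dots> \<le> Qc (ev H1 s y) b" by (rule comm_E2')
    also have "\<dots> = Qc y b" by (simp add: Qc_def ev_norm[OF h1] H1_E1)
    finally show "norm (J (ev H1 (- s) (H1 *v ev H2 b (ev H1 s y) - ev H2 b (H1 *v ev H1 s y)))) \<le> Qc y b" .
  qed
  then show ?thesis by (simp add: D_def)
qed

lemma perturb:
  "norm (ev H1 (al + ep) (ev H1 (- d) (ev H2 b (ev H1 d y))) - ev H1 al (ev H2 be y))
    \<le> \<bar>ep\<bar> * (norm (H1 *v y) + Qc y b) + Qc y b * \<bar>d\<bar> + opnorm H2 * norm y * \<bar>b - be\<bar>"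
proof -
  define Z where "Z = ev H1 (- d) (ev H2 b (ev H1 d y))"
  have "norm (ev H1 (al + ep) Z - ev H1 al (ev H2 be y))
      \<le> norm (ev H1 (al + ep) Z - ev H1 al Z) + norm (ev H1 al (Z - ev H2 b y)) + norm (ev H1 al (ev H2 b y - ev H2 be y))"
    by (rule order_trans[OF _ norm_triangle_le[OF add_mono[OF norm_triangle_ineq order_refl]]])
       (simp add: ev_diff[OF h1] algebra_simps)
  also have "\<dots> \<le> \<bar>ep\<bar> * (norm (H1 *v y) + Qc y b) + Qc y b * \<bar>d\<bar> + opnorm H2 * norm y * \<bar>b - be\<bar>"
  proof (intro add_mono)
    have "norm (H1 *v Z) = norm (H1 *v ev H2 b (ev H1 d y))" by (simp add: Z_def H1_E1)
    also have "\<dots> \<le> norm (ev H2 b (H1 *v ev H1 d y)) + norm (H1 *v ev H2 b (ev H1 d y) - ev H2 b (H1 *v ev H1 d y))"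
      by (rule norm_triangle_sub)
    also have "\<dots> \<le> norm (H1 *v y) + Qc y b"
      using comm_E2'[of b "ev H1 d y"] by (simp add: ev_norm[OF h2] H1_E1 Qc_def ev_norm[OF h1])
    finally have hz: "norm (H1 *v Z) \<le> norm (H1 *v y) + Qc y b" .
    have "norm (ev H1 (al + ep) Z - ev H1 al Z) \<le> norm (H1 *v Z) * \<bar>(al + ep) - al\<bar>" by (rule ev_lip[OF h1])
    also have "\<dots> \<le> \<bar>ep\<bar> * (norm (H1 *v y) + Qc y b)" using hz by (simp add: mult.commute mult_left_mono)
    finally show "norm (ev H1 (al + ep) Z - ev H1 al Z) \<le> \<bar>ep\<bar> * (norm (H1 *v y) + Qc y b)" .
    show "norm (ev H1 al (Z - ev H2 b y)) \<le> Qc y b * \<bar>d\<bar>" using D_comm by (simp add: Z_def ev_norm[OF h1])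
    have "norm (ev H2 b y - ev H2 be y) \<le> norm (H2 *v y) * \<bar>b - be\<bar>" by (rule ev_lip[OF h2])
    also have "\<dots> \<le> opnorm H2 * norm y * \<bar>b - be\<bar>" by (intro mult_right_mono opnorm_bound) auto
    finally show "norm (ev H1 al (ev H2 b y - ev H2 be y)) \<le> opnorm H2 * norm y * \<bar>b - be\<bar>" by (simp add: ev_norm[OF h1])
  qed
  finally show ?thesis by (simp add: Z_def)
qed

end


context setting
begin

lemma taylor2:
  assumes dg: "\<And>x. x \<in> {0..T} \<Longrightarrow> (g has_real_derivative g' x) (at x within {0..T})"
    and dg': "\<And>x. x \<in> {0..T} \<Longrightarrow> (g' has_real_derivative g'' x) (at x within {0..T})"
    and B: "\<And>x. x \<in> {0..T} \<Longrightarrow> \<bar>g'' x\<bar> \<le> c"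
    and s: "s \<in> {0..T}" and m: "m \<in> {0..T}"
  shows "\<bar>g s - g m - (s - m) * g' m\<bar> \<le> c * (s - m)^2"
proof -
  have "\<bar>(\<lambda>s. g s - s * g' m) s - (\<lambda>s. g s - s * g' m) m\<bar> \<le> (c * \<bar>s - m\<bar>) * \<bar>s - m\<bar>"
  proof (rule mvt_real)
    fix x assume x: "x \<in> {min m s..max m s}"
    then have xT: "x \<in> {0..T}" using sub_interval[OF m s] by auto
    show "((\<lambda>s. g s - s * g' m) has_real_derivative (g' x - g' m)) (at x within {min m s..max m s})"
      using has_field_derivative_subset[OF dg[OF xT] sub_interval[OF m s]]
      by (auto intro!: derivative_eq_intros)
    have "\<bar>g' x - g' m\<bar> \<le> c * \<bar>x - m\<bar>" by (rule lip_gen[OF dg' B xT m])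
    also have "\<dots> \<le> c * \<bar>s - m\<bar>" using x B[OF m]
      by (intro mult_left_mono) (auto simp: min_def max_def split: if_splits)
    finally show "\<bar>g' x - g' m\<bar> \<le> c * \<bar>s - m\<bar>" .
  qed
  moreover have "g s - s * g' m - (g m - m * g' m) = g s - g m - (s - m) * g' m" by (simp add: algebra_simps)
  moreover have "(c * \<bar>s - m\<bar>) * \<bar>s - m\<bar> = c * (s - m)^2" by (simp add: power2_eq_square mult.assoc)
  ultimately show ?thesis by metis
qed

lemma midpoint_gen:
  assumes dG: "\<And>x. x \<in> {0..T} \<Longrightarrow> (G has_real_derivative g x) (at x within {0..T})"
    and dg: "\<And>x. x \<in> {0..T} \<Longrightarrow> (g has_real_derivative g' x) (at x within {0..T})"
    and dg': "\<And>x. x \<in> {0..T} \<Longrightarrow> (g' has_real_derivative g'' x) (at x within {0..T})"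
    and B: "\<And>x. x \<in> {0..T} \<Longrightarrow> \<bar>g'' x\<bar> \<le> c"
    and t: "0 \<le> t" "0 \<le> h" "t + h \<le> T"
  shows "\<bar>G (t+h) - G t - h * g (t + h/2)\<bar> \<le> c * h^3"
proof -
  define m where "m = t + h/2"
  have mT: "m \<in> {0..T}" using t by (auto simp: m_def)
  have sub: "{min t (t+h)..max t (t+h)} \<subseteq> {0..T}" using t by auto
  define Gh where "Gh s = G s - s * g m - (s - m)^2 / 2 * g' m" for s
  have "\<bar>Gh (t+h) - Gh t\<bar> \<le> (c * h^2) * \<bar>(t+h) - t\<bar>"
  proof (rule mvt_real)
    fix x assume x: "x \<in> {min t (t+h)..max t (t+h)}"
    then have xT: "x \<in> {0..T}" using sub by auto
    show "(Gh has_real_derivative (g x - g m - (x - m) * g' m)) (at x within {min t (t+h)..max t (t+h)})"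
    proof -
      let ?S = "{min t (t+h)..max t (t+h)}"
      have e1: "(G has_real_derivative g x) (at x within ?S)" by (rule has_field_derivative_subset[OF dG[OF xT] sub])
      have e2: "((\<lambda>s. s * g m) has_real_derivative g m) (at x within ?S)"
        by (rule DERIV_cong[OF _ refl], auto intro!: derivative_eq_intros)
      have e3: "((\<lambda>s. (s - m)^2 / 2 * g' m) has_real_derivative ((x - m) * g' m)) (at x within ?S)"
        by (rule DERIV_cong[OF _ refl], auto intro!: derivative_eq_intros)
      show ?thesis unfolding Gh_def by (rule DERIV_diff[OF DERIV_diff[OF e1 e2] e3])
    qed
    have "\<bar>g x - g m - (x - m) * g' m\<bar> \<le> c * (x - m)^2" by (rule taylor2[OF dg dg' B xT mT])
    also have "\<dots> \<le> c * h^2"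
    proof (rule mult_left_mono)
      have "\<bar>x - m\<bar> \<le> \<bar>h\<bar>" using x t by (auto simp: m_def)
      then show "(x - m)^2 \<le> h^2" by (simp add: abs_le_square_iff)
    qed (use B[OF mT] in auto)
    finally show "\<bar>g x - g m - (x - m) * g' m\<bar> \<le> c * h^2" .
  qed
  moreover have "Gh (t+h) - Gh t = G (t+h) - G t - h * g (t + h/2)"
    by (simp add: Gh_def m_def power2_eq_square algebra_simps)
  ultimately show ?thesis using t by (simp add: power3_eq_cube power2_eq_square ac_simps)
qed

lemma delta_bound:
  assumes t: "0 \<le> t" "0 \<le> h" "t + h \<le> T"
  shows "\<bar>F1 (t + h/2) - F1 t - h/2 * f1 (t + h/2)\<bar> \<le> a1 * h^2"
proof -
  define m where "m = t + h/2"
  have mT: "m \<in> {0..T}" and tT: "t \<in> {0..T}" using t by (auto simp: m_def)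
  have sub: "{min t m..max t m} \<subseteq> {0..T}" using t by (auto simp: m_def)
  have "\<bar>(\<lambda>s. F1 s - s * f1 m) m - (\<lambda>s. F1 s - s * f1 m) t\<bar> \<le> (a1 * h) * \<bar>m - t\<bar>"
  proof (rule mvt_real)
    fix x assume x: "x \<in> {min t m..max t m}"
    then have xT: "x \<in> {0..T}" using sub by auto
    show "((\<lambda>s. F1 s - s * f1 m) has_real_derivative (f1 x - f1 m)) (at x within {min t m..max t m})"
      using has_field_derivative_subset[OF F1_deriv[OF xT] sub] by (auto intro!: derivative_eq_intros)
    have "\<bar>f1 x - f1 m\<bar> \<le> a1 * \<bar>x - m\<bar>" by (rule f1_lip[OF xT mT])
    also have "\<dots> \<le> a1 * h" using x t a1 by (intro mult_left_mono) (auto simp: m_def min_def max_def)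
    finally show "\<bar>f1 x - f1 m\<bar> \<le> a1 * h" .
  qed
  also have "\<dots> \<le> a1 * h^2" using t a1 by (simp add: m_def power2_eq_square mult_left_mono)
  finally show ?thesis by (simp add: m_def algebra_simps)
qed

definition "qq = C1 * (3 + C1 * b0 * T) * b0"
definition "Ks2 = Kg2 + a2 * (1 + qq * T) + qq * a1 + nH2 * b2"

lemma Qc_bound:
  assumes ny: "norm y = r0" and hy: "norm (H1 *v y) \<le> MH" and b: "\<bar>b\<bar> \<le> b0 * h" and t: "0 \<le> h" "h \<le> T"
  shows "Qc y b \<le> qq * h * (MH + r0)"
proof -
  have bT: "\<bar>b\<bar> \<le> b0 * T" using b t b0 by (meson mult_left_mono order_trans)
  have "r0 * (2 + C1 * \<bar>b\<bar>) \<le> r0 * (2 + C1 * (b0 * T))"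
    using bT C1 r00 by (intro mult_left_mono add_left_mono) auto
  also have "\<dots> \<le> (MH + r0) * (2 + C1 * b0 * T)"
  proof -
    have "0 \<le> 2 + C1 * (b0 * T)" using C1 b0 T by simp
    then have "r0 * (2 + C1 * (b0 * T)) \<le> (MH + r0) * (2 + C1 * (b0 * T))" using MH0 by (intro mult_right_mono) auto
    then show ?thesis by (simp add: mult.assoc)
  qed
  finally have A0: "r0 * (2 + C1 * \<bar>b\<bar>) \<le> (MH + r0) * (2 + C1 * b0 * T)" .
  have A1: "(norm y + norm (H1 *v y)) / 2 \<le> MH + r0" using ny hy r00 MH0 by simp
  have A: "(norm y + norm (H1 *v y)) / 2 + norm y * (2 + C1 * \<bar>b\<bar>) \<le> (3 + C1 * b0 * T) * (MH + r0)"
  proof -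
    have "(3 + C1 * b0 * T) * (MH + r0) = (MH + r0) + (MH + r0) * (2 + C1 * b0 * T)" by (simp add: algebra_simps)
    moreover have "norm y * (2 + C1 * \<bar>b\<bar>) = r0 * (2 + C1 * \<bar>b\<bar>)" by (simp add: ny)
    ultimately show ?thesis using A0 A1 by linarith
  qed
  have p: "0 \<le> (3 + C1 * b0 * T) * (MH + r0)" using C1 b0 T MH0 r00 by (intro mult_nonneg_nonneg add_nonneg_nonneg) auto
  have "C1 * ((norm y + norm (H1 *v y)) / 2 + norm y * (2 + C1 * \<bar>b\<bar>)) \<le> C1 * ((3 + C1 * b0 * T) * (MH + r0))"
    using A C1 by (rule mult_left_mono)
  moreover have "0 \<le> C1 * ((3 + C1 * b0 * T) * (MH + r0))" using C1 p by simp
  ultimately have "Qc y b \<le> C1 * ((3 + C1 * b0 * T) * (MH + r0)) * (b0 * h)"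
    unfolding Qc_def using b by (rule_tac mult_mono) auto
  then show ?thesis by (simp add: qq_def ac_simps)
qed

lemma step_s2_ev: "step_s2 f1 f2 H1 H2 t h v = ev H1 (h / 2 * f1 (t + h / 2)) (ev H2 (h * f2 (t + h / 2)) (ev H1 (h / 2 * f1 (t + h / 2)) v))"
  by (simp add: step_s2_def ev_def)


lemma qq0: "qq \<ge> 0" unfolding qq_def using C1 b0 T by (intro mult_nonneg_nonneg add_nonneg_nonneg) auto

lemma LE_s2:
  assumes t: "0 \<le> t" "0 \<le> h" "t + h \<le> T"
  shows "norm (step_s2 f1 f2 H1 H2 t h (psi t) - psi (t+h)) \<le> Ks2 * h^3 * (MH + r0)"
proof -
  define m where "m = t + h/2"
  define al where "al = h/2 * f1 m"
  define y where "y = ev H1 al (psi t)"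
  define d where "d = F1 m - F1 t - al"
  define ep where "ep = (F1 (t+h) - F1 t) - h * f1 m"
  define b where "b = F2 (t+h) - F2 t"
  define be where "be = h * f2 m"
  have tT: "t \<in> {0..T}" and thT: "t + h \<in> {0..T}" using t by auto
  have i1: "integral {t..t+h/2} f1 = F1 m - F1 t" using t by (auto simp: m_def intro!: int_F1)
  have i2: "integral {t+h/2..t+h} f1 = F1 (t+h) - F1 m" using t by (auto simp: m_def intro!: int_F1)
  have i3: "integral {t..t+h} f2 = F2 (t+h) - F2 t" using t by (auto intro!: int_F2)
  have g2eq: "step_g2 f1 f2 H1 H2 t h (psi t) = ev H1 (al + ep) (ev H1 (- d) (ev H2 b (ev H1 d y)))"
  proof -
    have "ev H1 d y = ev H1 (F1 m - F1 t) (psi t)" by (simp add: y_def d_def ev_group[OF h1])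
    moreover have "al + ep + - d = F1 (t+h) - F1 m" by (simp add: al_def ep_def d_def algebra_simps)
    ultimately show ?thesis unfolding step_g2_ev i1 i2 i3 b_def[symmetric]
      by (simp add: ev_group[OF h1] m_def)
  qed
  have s2eq: "step_s2 f1 f2 H1 H2 t h (psi t) = ev H1 al (ev H2 be y)"
    by (simp add: step_s2_ev al_def be_def y_def m_def)
  have ny: "norm y = r0" by (simp add: y_def ev_norm[OF h1] psi_norm[OF tT])
  have hy: "norm (H1 *v y) \<le> MH" by (simp add: y_def H1_E1 MH[OF tT])
  have bb: "\<bar>b\<bar> \<le> b0 * h" using F2_lip[OF thT tT] t by (simp add: b_def)
  have Q: "Qc y b \<le> qq * h * (MH + r0)" by (rule Qc_bound[OF ny hy bb]) (use t in auto)
  have Q0: "Qc y b \<ge> 0" unfolding Qc_def using C1 r00 by (simp add: ny)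
  have ep: "\<bar>ep\<bar> \<le> a2 * h^3" unfolding ep_def m_def
    by (rule midpoint_gen[OF F1_deriv d1 dd1 ba2 t])
  have dd: "\<bar>d\<bar> \<le> a1 * h^2" unfolding d_def al_def m_def by (rule delta_bound[OF t])
  have bbe: "\<bar>b - be\<bar> \<le> b2 * h^3" unfolding b_def be_def m_def
    by (rule midpoint_gen[OF F2_deriv d2 dd2 bb2 t])
  have T1: "\<bar>ep\<bar> * (norm (H1 *v y) + Qc y b) \<le> (a2 * (1 + qq * T)) * h^3 * (MH + r0)"
  proof -
    have "norm (H1 *v y) + Qc y b \<le> MH + qq * h * (MH + r0)" using hy Q by simp
    also have "\<dots> \<le> (1 + qq * T) * (MH + r0)"
    proof -
      have "qq * h * (MH + r0) \<le> qq * T * (MH + r0)" using qq0 t MH0 r00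
        by (intro mult_right_mono mult_left_mono) auto
      then show ?thesis using r00 by (simp add: algebra_simps)
    qed
    finally have "norm (H1 *v y) + Qc y b \<le> (1 + qq * T) * (MH + r0)" .
    then have "\<bar>ep\<bar> * (norm (H1 *v y) + Qc y b) \<le> (a2 * h^3) * ((1 + qq * T) * (MH + r0))"
      using ep a2 Q0 by (intro mult_mono) auto
    then show ?thesis by (simp add: ac_simps)
  qed
  have T2: "Qc y b * \<bar>d\<bar> \<le> (qq * a1) * h^3 * (MH + r0)"
  proof -
    have "Qc y b * \<bar>d\<bar> \<le> (qq * h * (MH + r0)) * (a1 * h^2)"
      using Q dd Q0 qq0 t MH0 r00 by (intro mult_mono) auto
    then show ?thesis by (simp add: power3_eq_cube power2_eq_square ac_simps)
  qed
  have T3: "opnorm H2 * norm y * \<bar>b - be\<bar> \<le> (nH2 * b2) * h^3 * (MH + r0)"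
  proof -
    have "opnorm H2 * norm y * \<bar>b - be\<bar> \<le> (nH2 * (MH + r0)) * (b2 * h^3)"
      using bbe nH20 MH0 ny r00 by (intro mult_mono) (auto simp: nH2_def)
    then show ?thesis by (simp add: ac_simps)
  qed
  have "norm (step_s2 f1 f2 H1 H2 t h (psi t) - psi (t+h))
      \<le> norm (step_g2 f1 f2 H1 H2 t h (psi t) - step_s2 f1 f2 H1 H2 t h (psi t)) + norm (step_g2 f1 f2 H1 H2 t h (psi t) - psi (t+h))"
    using norm_triangle_ineq4[of "step_g2 f1 f2 H1 H2 t h (psi t) - psi (t+h)" "step_g2 f1 f2 H1 H2 t h (psi t) - step_s2 f1 f2 H1 H2 t h (psi t)"]
    by simp
  also have "\<dots> \<le> ((a2 * (1 + qq * T)) * h^3 * (MH + r0) + (qq * a1) * h^3 * (MH + r0) + (nH2 * b2) * h^3 * (MH + r0))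
      + Kg2 * h^3 * (MH + r0)"
  proof (rule add_mono[OF _ LE_g2[OF t]])
    show "norm (step_g2 f1 f2 H1 H2 t h (psi t) - step_s2 f1 f2 H1 H2 t h (psi t))
        \<le> (a2 * (1 + qq * T)) * h^3 * (MH + r0) + (qq * a1) * h^3 * (MH + r0) + (nH2 * b2) * h^3 * (MH + r0)"
      unfolding g2eq s2eq using perturb[of al ep d b y be] T1 T2 T3 by linarith
  qed
  also have "\<dots> = Ks2 * h^3 * (MH + r0)" by (simp add: Ks2_def algebra_simps)
  finally show ?thesis .
qed

end



lemma telescope:
  fixes S :: "real \<Rightarrow> real \<Rightarrow> 'a::real_normed_vector \<Rightarrow> 'a"
  assumes iso: "\<And>k x y. k < L \<Longrightarrow> norm (S (real k * h) h x - S (real k * h) h y) = norm (x - y)"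
  shows "norm (steps S L h (p 0) - p (real L * h)) \<le> (\<Sum>k<L. norm (S (real k * h) h (p (real k * h)) - p (real (Suc k) * h)))"
  using iso
proof (induction L)
  case 0
  then show ?case by simp
next
  case (Suc n)
  have IH: "norm (steps S n h (p 0) - p (real n * h)) \<le> (\<Sum>k<n. norm (S (real k * h) h (p (real k * h)) - p (real (Suc k) * h)))"
    using Suc.IH Suc.prems by auto
  have "norm (steps S (Suc n) h (p 0) - p (real (Suc n) * h))
      \<le> norm (S (real n * h) h (steps S n h (p 0)) - S (real n * h) h (p (real n * h)))
        + norm (S (real n * h) h (p (real n * h)) - p (real (Suc n) * h))"
    using norm_triangle_ineq[of "S (real n * h) h (steps S n h (p 0)) - S (real n * h) h (p (real n * h))"
        "S (real n * h) h (p (real n * h)) - p (real (Suc n) * h)"] by simp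
  also have "\<dots> = norm (steps S n h (p 0) - p (real n * h)) + norm (S (real n * h) h (p (real n * h)) - p (real (Suc n) * h))"
    using Suc.prems[of n] by simp
  also have "\<dots> \<le> (\<Sum>k<Suc n. norm (S (real k * h) h (p (real k * h)) - p (real (Suc k) * h)))"
    using IH by simp
  finally show ?case .
qed

lemma sum_bound:
  assumes "\<And>k. k < L \<Longrightarrow> x k \<le> B"
  shows "(\<Sum>k<L. x k) \<le> real L * B"
  using sum_mono[of "{..<L}" x "\<lambda>_. B"] assms by simp

lemma cont_bound:
  assumes "continuous_on {0..T} (f :: real \<Rightarrow> real)"
  obtains B where "\<And>t. t \<in> {0..T} \<Longrightarrow> \<bar>f t\<bar> \<le> B"
proof -
  have "bounded (f ` {0..T})" by (rule compact_imp_bounded[OF compact_continuous_image[OF assms compact_Icc]])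
  then obtain B where B: "\<And>y. y \<in> f ` {0..T} \<Longrightarrow> norm y \<le> B" by (auto simp: bounded_iff)
  have "\<bar>f t\<bar> \<le> B" if "t \<in> {0..T}" for t using B[of "f t"] that by simp
  then show ?thesis by (rule that)
qed

lemma s1_ev: "step_s1 f1 f2 H1 H2 t h v = ev H2 (f2 (t+h) * h) (ev H1 (f1 (t+h) * h) v)"
  by (simp add: step_s1_def ev_def)
lemma g1_ev: "step_g1 f1 f2 H1 H2 t h v = ev H2 (integral {t..t+h} f2) (ev H1 (integral {t..t+h} f1) v)"
  by (simp add: step_g1_def ev_def)
lemma s2_ev: "step_s2 f1 f2 H1 H2 t h v = ev H1 (h / 2 * f1 (t + h / 2)) (ev H2 (h * f2 (t + h / 2)) (ev H1 (h / 2 * f1 (t + h / 2)) v))"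
  by (simp add: step_s2_def ev_def)
lemma g2_ev: "step_g2 f1 f2 H1 H2 t h v = ev H1 (integral {t+h/2..t+h} f1) (ev H2 (integral {t..t+h} f2) (ev H1 (integral {t..t+h/2} f1) v))"
  by (simp add: step_g2_def ev_def)

context ham
begin

lemma iso_s1: "norm (step_s1 f1 f2 H1 H2 t h x - step_s1 f1 f2 H1 H2 t h y) = norm (x - y)"
  unfolding s1_ev by (simp add: ev_diff[OF h1, symmetric] ev_diff[OF h2, symmetric] ev_norm[OF h1] ev_norm[OF h2])
lemma iso_g1: "norm (step_g1 f1 f2 H1 H2 t h x - step_g1 f1 f2 H1 H2 t h y) = norm (x - y)"
  unfolding g1_ev by (simp add: ev_diff[OF h1, symmetric] ev_diff[OF h2, symmetric] ev_norm[OF h1] ev_norm[OF h2])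
lemma iso_s2: "norm (step_s2 f1 f2 H1 H2 t h x - step_s2 f1 f2 H1 H2 t h y) = norm (x - y)"
  unfolding s2_ev by (simp add: ev_diff[OF h1, symmetric] ev_diff[OF h2, symmetric] ev_norm[OF h1] ev_norm[OF h2])
lemma iso_g2: "norm (step_g2 f1 f2 H1 H2 t h x - step_g2 f1 f2 H1 H2 t h y) = norm (x - y)"
  unfolding g2_ev by (simp add: ev_diff[OF h1, symmetric] ev_diff[OF h2, symmetric] ev_norm[OF h1] ev_norm[OF h2])

end

context setting
begin

lemma global:
  assumes L: "L \<ge> 1"
    and iso: "\<And>t h x y. norm (S t h x - S t h y) = norm (x - y)"
    and loc: "\<And>t h. 0 \<le> t \<Longrightarrow> 0 \<le> h \<Longrightarrow> t + h \<le> T \<Longrightarrow> norm (S t h (psi t) - psi (t + h)) \<le> K * h^p * M"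
    and p: "p \<ge> 1"
  shows "norm (steps S L (T / real L) (psi 0) - psi T) \<le> K * (T ^ p / real L ^ (p - 1)) * M"
proof -
  define h where "h = T / real L"
  have h0: "h \<ge> 0" using T by (simp add: h_def)
  have Lh: "real L * h = T" using L by (simp add: h_def)
  have "norm (steps S L h (psi 0) - psi (real L * h)) \<le> (\<Sum>k<L. norm (S (real k * h) h (psi (real k * h)) - psi (real (Suc k) * h)))"
    by (rule telescope) (rule iso)
  also have "\<dots> \<le> real L * (K * h^p * M)"
  proof (rule sum_bound)
    fix k assume k: "k < L"
    have "real (Suc k) * h \<le> real L * h" using k h0 by (intro mult_right_mono) auto
    then have "real k * h + h \<le> T" using Lh by (simp add: algebra_simps)
    then have "norm (S (real k * h) h (psi (real k * h)) - psi (real k * h + h)) \<le> K * h^p * M"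
      using h0 by (intro loc) auto
    then show "norm (S (real k * h) h (psi (real k * h)) - psi (real (Suc k) * h)) \<le> K * h^p * M"
      by (simp add: algebra_simps)
  qed
  also have "real L * (K * h^p * M) = K * (T ^ p / real L ^ (p - 1)) * M"
  proof -
    obtain q where q: "p = Suc q" using p by (cases p) auto
    then show ?thesis using L by (simp add: h_def power_divide field_simps)
  qed
  finally show ?thesis using Lh by (simp add: h_def)
qed

end



lemma scale_le: "K \<le> C \<Longrightarrow> 0 \<le> a \<Longrightarrow> 0 \<le> (M::real) \<Longrightarrow> K * a * M \<le> C * a * M"
  by (intro mult_right_mono) auto

theorem theorem4:
  fixes T C1 C2 :: real
    and f1 f2 f1' f2' f1'' f2'' :: "real \<Rightarrow> real"
    and H2 :: "complex ^ ('n::finite) ^ 'n"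
  assumes T: "T > 0"
    and d1: "\<And>t. t \<in> {0..T} \<Longrightarrow> (f1 has_real_derivative f1' t) (at t within {0..T})"
    and dd1: "\<And>t. t \<in> {0..T} \<Longrightarrow> (f1' has_real_derivative f1'' t) (at t within {0..T})"
    and c1: "continuous_on {0..T} f1''"
    and d2: "\<And>t. t \<in> {0..T} \<Longrightarrow> (f2 has_real_derivative f2' t) (at t within {0..T})"
    and dd2: "\<And>t. t \<in> {0..T} \<Longrightarrow> (f2' has_real_derivative f2'' t) (at t within {0..T})"
    and c2: "continuous_on {0..T} f2''"
    and herm2: "hermitian H2"
    and C1: "C1 \<ge> 0" and C2: "C2 \<ge> 0"
  shows "\<exists>C. \<forall>(H1 :: complex ^ 'n ^ 'n) (D1 :: complex ^ 'n ^ 'n) (psi :: real \<Rightarrow> complex ^ 'n) (L :: nat).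
     hermitian H1 \<longrightarrow> H1 = adj D1 ** D1 \<longrightarrow>
     (\<forall>v. norm (comm H1 H2 *v v) \<le> C1 * (norm (D1 *v v) + norm v)) \<longrightarrow>
     (\<forall>v. norm (comm H1 (comm H1 H2) *v v) \<le> C2 * (norm (H1 *v v) + norm v)) \<longrightarrow>
     (\<forall>t\<in>{0..T}. (psi has_vector_derivative
          (- \<i>) *s ((f1 t *\<^sub>R H1 + f2 t *\<^sub>R H2) *v psi t)) (at t within {0..T})) \<longrightarrow>
     L \<ge> 1 \<longrightarrow>
     2 * (T / real L) * (supnorm T f1 + supnorm T f2) * (C1 + opnorm H2) \<le> 1 \<longrightarrow>
     norm (steps (step_s1 f1 f2 H1 H2) L (T / real L) (psi 0) - psi T)
       \<le> C * (T ^ 2 / real L) * ((SUP t\<in>{0..T}. norm (H1 *v psi t)) + norm (psi 0)) \<and>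
     norm (steps (step_g1 f1 f2 H1 H2) L (T / real L) (psi 0) - psi T)
       \<le> C * (T ^ 2 / real L) * ((SUP t\<in>{0..T}. sqrt (norm (psi 0) * norm (H1 *v psi t))) + norm (psi 0)) \<and>
     norm (steps (step_s2 f1 f2 H1 H2) L (T / real L) (psi 0) - psi T)
       \<le> C * (T ^ 3 / (real L) ^ 2) * ((SUP t\<in>{0..T}. norm (H1 *v psi t)) + norm (psi 0)) \<and>
     norm (steps (step_g2 f1 f2 H1 H2) L (T / real L) (psi 0) - psi T)
       \<le> C * (T ^ 3 / (real L) ^ 2) * ((SUP t\<in>{0..T}. norm (H1 *v psi t)) + norm (psi 0))"
proof -
  have cf1: "continuous_on {0..T} f1" by (rule DERIV_continuous_on[OF d1])
  have cf1': "continuous_on {0..T} f1'" by (rule DERIV_continuous_on[OF dd1])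
  have cf2: "continuous_on {0..T} f2" by (rule DERIV_continuous_on[OF d2])
  have cf2': "continuous_on {0..T} f2'" by (rule DERIV_continuous_on[OF dd2])
  obtain a0 where ba0: "\<And>t. t \<in> {0..T} \<Longrightarrow> \<bar>f1 t\<bar> \<le> a0" using cont_bound[OF cf1] by blast
  obtain a1 where ba1: "\<And>t. t \<in> {0..T} \<Longrightarrow> \<bar>f1' t\<bar> \<le> a1" using cont_bound[OF cf1'] by blast
  obtain a2 where ba2: "\<And>t. t \<in> {0..T} \<Longrightarrow> \<bar>f1'' t\<bar> \<le> a2" using cont_bound[OF c1] by blast
  obtain b0 where bb0: "\<And>t. t \<in> {0..T} \<Longrightarrow> \<bar>f2 t\<bar> \<le> b0" using cont_bound[OF cf2] by blast
  obtain b1 where bb1: "\<And>t. t \<in> {0..T} \<Longrightarrow> \<bar>f2' t\<bar> \<le> b1" using cont_bound[OF cf2'] by blast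
  obtain b2 where bb2: "\<And>t. t \<in> {0..T} \<Longrightarrow> \<bar>f2'' t\<bar> \<le> b2" using cont_bound[OF c2] by blast
  define nH where "nH = opnorm H2"
  define q where "q = C1 * (3 + C1 * b0 * T) * b0"
  define Ks1 where "Ks1 = a0 * C1 * (3 + C1 * b0 * T) * b0 + a1 + b1 * nH"
  define Kg1 where "Kg1 = a0 * C1 * (3 + C1 * b0 * T) * b0"
  define Lphi where "Lphi = b1 * (2 * C1) + b0 * (b0 * (2 * C1 * (nH + 2 * C1)) + b0 * nH * (2 * C1))"
  define Kg2 where "Kg2 = a0 * Lphi + (a1 * b0 * (2 * C1) + b0 * C2 * a0^2)"
  define Ks2 where "Ks2 = Kg2 + a2 * (1 + q * T) + q * a1 + nH * b2"
  define C where "C = max (max Ks1 Kg1) (max Kg2 Ks2)"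
  show ?thesis
  proof (rule exI[of _ C], intro allI impI)
    fix H1 D1 :: "complex ^ 'n ^ 'n" and psi :: "real \<Rightarrow> complex ^ 'n" and L :: nat
    assume herm1: "hermitian H1" and hd: "H1 = adj D1 ** D1"
      and cb1: "\<forall>v. norm (comm H1 H2 *v v) \<le> C1 * (norm (D1 *v v) + norm v)"
      and cb2: "\<forall>v. norm (comm H1 (comm H1 H2) *v v) \<le> C2 * (norm (H1 *v v) + norm v)"
      and dpsi: "\<forall>t\<in>{0..T}. (psi has_vector_derivative
          (- \<i>) *s ((f1 t *\<^sub>R H1 + f2 t *\<^sub>R H2) *v psi t)) (at t within {0..T})"
      and L: "L \<ge> 1"
      and hc: "2 * (T / real L) * (supnorm T f1 + supnorm T f2) * (C1 + opnorm H2) \<le> 1"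
    define MH where "MH = (SUP t\<in>{0..T}. norm (H1 *v psi t))"
    define MS where "MS = (SUP t\<in>{0..T}. sqrt (norm (psi 0) * norm (H1 *v psi t)))"
    have contpsi: "continuous_on {0..T} psi"
      unfolding continuous_on_eq_continuous_within
      using dpsi has_vector_derivative_continuous by blast
    have cH: "continuous_on {0..T} (\<lambda>t. norm (H1 *v psi t))"
      by (intro continuous_on_norm bounded_linear.continuous_on[OF matrix_vector_mul_bounded_linear contpsi])
    have cS: "continuous_on {0..T} (\<lambda>t. sqrt (norm (psi 0) * norm (H1 *v psi t)))"
      by (intro continuous_on_real_sqrt continuous_on_mult continuous_on_const cH)
    have bdH: "bdd_above ((\<lambda>t. norm (H1 *v psi t)) ` {0..T})"
      by (rule bounded_imp_bdd_above[OF compact_imp_bounded[OF compact_continuous_image[OF cH compact_Icc]]])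
    have bdS: "bdd_above ((\<lambda>t. sqrt (norm (psi 0) * norm (H1 *v psi t))) ` {0..T})"
      by (rule bounded_imp_bdd_above[OF compact_imp_bounded[OF compact_continuous_image[OF cS compact_Icc]]])
    have MH: "norm (H1 *v psi t) \<le> MH" if "t \<in> {0..T}" for t
      unfolding MH_def by (rule cSUP_upper[OF that bdH])
    have MS: "sqrt (norm (psi 0) * norm (H1 *v psi t)) \<le> MS" if "t \<in> {0..T}" for t
      unfolding MS_def by (rule cSUP_upper[OF that bdS])
    interpret S: setting H1 H2 D1 C1 C2 T f1 f2 f1' f2' f1'' f2'' psi a0 a1 a2 b0 b1 b2 MH MS
    proof
      show "hermitian H1" by (rule herm1)
      show "hermitian H2" by (rule herm2)
      show "H1 = adj D1 ** D1" by (rule hd)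
      show "norm (comm H1 H2 *v v) \<le> C1 * (norm (D1 *v v) + norm v)" for v using cb1 by blast
      show "norm (comm H1 (comm H1 H2) *v v) \<le> C2 * (norm (H1 *v v) + norm v)" for v using cb2 by blast
      show "(psi has_vector_derivative - J (f1 t *\<^sub>R (H1 *v psi t) + f2 t *\<^sub>R (H2 *v psi t))) (at t within {0..T})"
        if "t \<in> {0..T}" for t
        using dpsi that by (simp add: J_def matrix_vector_mult_add_rdistrib mv_scaleR_left)
    qed (use C1 C2 T d1 dd1 d2 dd2 ba0 ba1 ba2 bb0 bb1 bb2 MH MS in auto)
    have M0: "MH + norm (psi 0) \<ge> 0" using S.MH0 by simp
    have MS0: "MS + norm (psi 0) \<ge> 0" using S.MS0 by simp
    have eKs1: "S.Ks1 = Ks1" by (simp add: S.Ks1_def Ks1_def S.nH2_def nH_def)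
    have eKg1: "S.Kg1 = Kg1" by (simp add: S.Kg1_def Kg1_def)
    have eKg2: "S.Kg2 = Kg2" by (simp add: S.Kg2_def Kg2_def S.Lphi_def Lphi_def S.nH2_def nH_def)
    have eKs2: "S.Ks2 = Ks2" by (simp add: S.Ks2_def Ks2_def eKg2 S.qq_def q_def S.nH2_def nH_def)
    have TL2: "T ^ 2 / real L \<ge> 0" using T by simp
    have TL3: "T ^ 3 / (real L)^2 \<ge> 0" using T by simp
    have r1: "norm (steps (step_s1 f1 f2 H1 H2) L (T / real L) (psi 0) - psi T)
       \<le> C * (T ^ 2 / real L) * ((SUP t\<in>{0..T}. norm (H1 *v psi t)) + norm (psi 0))"
    proof -
      have "norm (steps (step_s1 f1 f2 H1 H2) L (T / real L) (psi 0) - psi T) \<le> Ks1 * (T ^ 2 / real L ^ (2 - 1)) * (MH + S.r0)"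
        unfolding eKs1[symmetric]
        by (rule S.global[OF L S.iso_s1 S.LE_s1]) auto
      also have "\<dots> \<le> C * (T ^ 2 / real L) * (MH + norm (psi 0))"
        using scale_le[of Ks1 C "T ^ 2 / real L" "MH + norm (psi 0)", OF _ TL2 M0] by (simp add: S.r0_def C_def)
      finally show ?thesis by (simp add: MH_def)
    qed
    show "norm (steps (step_s1 f1 f2 H1 H2) L (T / real L) (psi 0) - psi T)
       \<le> C * (T ^ 2 / real L) * ((SUP t\<in>{0..T}. norm (H1 *v psi t)) + norm (psi 0)) \<and>
     norm (steps (step_g1 f1 f2 H1 H2) L (T / real L) (psi 0) - psi T)
       \<le> C * (T ^ 2 / real L) * ((SUP t\<in>{0..T}. sqrt (norm (psi 0) * norm (H1 *v psi t))) + norm (psi 0)) \<and>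
     norm (steps (step_s2 f1 f2 H1 H2) L (T / real L) (psi 0) - psi T)
       \<le> C * (T ^ 3 / (real L) ^ 2) * ((SUP t\<in>{0..T}. norm (H1 *v psi t)) + norm (psi 0)) \<and>
     norm (steps (step_g2 f1 f2 H1 H2) L (T / real L) (psi 0) - psi T)
       \<le> C * (T ^ 3 / (real L) ^ 2) * ((SUP t\<in>{0..T}. norm (H1 *v psi t)) + norm (psi 0))"
    proof (intro conjI r1)
      have "norm (steps (step_g1 f1 f2 H1 H2) L (T / real L) (psi 0) - psi T) \<le> Kg1 * (T ^ 2 / real L ^ (2 - 1)) * (MS + S.r0)"
        unfolding eKg1[symmetric]
        by (rule S.global[OF L S.iso_g1 S.LE_g1]) auto
      also have "\<dots> \<le> C * (T ^ 2 / real L) * (MS + norm (psi 0))"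
        using scale_le[of Kg1 C "T ^ 2 / real L" "MS + norm (psi 0)", OF _ TL2 MS0] by (simp add: S.r0_def C_def)
      finally show "norm (steps (step_g1 f1 f2 H1 H2) L (T / real L) (psi 0) - psi T)
       \<le> C * (T ^ 2 / real L) * ((SUP t\<in>{0..T}. sqrt (norm (psi 0) * norm (H1 *v psi t))) + norm (psi 0))"
        by (simp add: MS_def)
      have "norm (steps (step_s2 f1 f2 H1 H2) L (T / real L) (psi 0) - psi T) \<le> Ks2 * (T ^ 3 / real L ^ (3 - 1)) * (MH + S.r0)"
        unfolding eKs2[symmetric]
        by (rule S.global[OF L S.iso_s2 S.LE_s2]) auto
      also have "\<dots> \<le> C * (T ^ 3 / (real L)^2) * (MH + norm (psi 0))"
        using scale_le[of Ks2 C "T ^ 3 / (real L)^2" "MH + norm (psi 0)", OF _ TL3 M0] by (simp add: S.r0_def C_def)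
      finally show "norm (steps (step_s2 f1 f2 H1 H2) L (T / real L) (psi 0) - psi T)
       \<le> C * (T ^ 3 / (real L) ^ 2) * ((SUP t\<in>{0..T}. norm (H1 *v psi t)) + norm (psi 0))"
        by (simp add: MH_def)
      have "norm (steps (step_g2 f1 f2 H1 H2) L (T / real L) (psi 0) - psi T) \<le> Kg2 * (T ^ 3 / real L ^ (3 - 1)) * (MH + S.r0)"
        unfolding eKg2[symmetric]
        by (rule S.global[OF L S.iso_g2 S.LE_g2]) auto
      also have "\<dots> \<le> C * (T ^ 3 / (real L)^2) * (MH + norm (psi 0))"
        using scale_le[of Kg2 C "T ^ 3 / (real L)^2" "MH + norm (psi 0)", OF _ TL3 M0] by (simp add: S.r0_def C_def)
      finally show "norm (steps (step_g2 f1 f2 H1 H2) L (T / real L) (psi 0) - psi T)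
       \<le> C * (T ^ 3 / (real L) ^ 2) * ((SUP t\<in>{0..T}. norm (H1 *v psi t)) + norm (psi 0))"
        by (simp add: MH_def)
    qed
  qed
qed


end
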